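(* Let $G=(V,E)$ be a connected graph with $n\ge2$ vertices, with adjacency eigenvalues $\lambda_1(G)\ge\lambda_2(G)\ge\cdots\ge\lambda_n(G)$. Let $\rho_V(G)=\max_{v\in V}\rho(G-v)$ and $\rho_E(G)=\max_{e\in E}\rho(G-e)$. Then: (a) $\lambda_2(G)<\rho_V(G)\le\rho_E(G)$; (b) if $G$ is non-bipartite, then $-\lambda_n(G)<\rho_E(G)$; (c) if $\Gamma(G)$ is nonempty, then $\rho_\Gamma(G)<\rho_E(G)$, where $\rho_\Gamma(G)=\max_{G_\pi\in\Gamma(G)}\rho(G_\pi)$.
   Context: All graphs are finite, simple and undirected. $G-v$ is obtained by deleting vertex $v$ and its incident edges; $G-e$ is obtained by deleting edge $e$ (keeping all vertices). $\rho(\cdot)$ denotes the spectral radius (largest modulus of an eigenvalue) of the adjacency matrix. A signed graph $G_\pi$ is a pair $(G,\pi)$ with $\pi:E\to\{+1,-1\}$, with adjacency matrix having entry $\pi(\{i,j\})$ for adjacent $i,j$ and $0$ otherwise; $\rho(G_\pi)$ is the largest modulus of its eigenvalues. $\Gamma(G)=\{G_\pi:\ \pi:E\to\{\pm1\},\ \rho(G_\pi)<\rho(G)\}$. *)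

theory Defs
  imports "Jordan_Normal_Form.Spectral_Radius" "HOL-Library.Multiset"
begin

definition simple_graph :: "'a set \<Rightarrow> 'a set set \<Rightarrow> bool" where
  "simple_graph V E \<longleftrightarrow> finite V \<and> (\<forall>e\<in>E. e \<subseteq> V \<and> card e = 2)"

definition connected_graph :: "'a set \<Rightarrow> 'a set set \<Rightarrow> bool" where
  "connected_graph V E \<longleftrightarrow>
     (\<forall>u\<in>V. \<forall>w\<in>V. (\<lambda>x y. {x, y} \<in> E)\<^sup>*\<^sup>* u w)"

definition bipartite_graph :: "'a set \<Rightarrow> 'a set set \<Rightarrow> bool" where
  "bipartite_graph V E \<longleftrightarrow>
     (\<exists>S. S \<subseteq> V \<and> (\<forall>x y. {x, y} \<in> E \<longrightarrow> (x \<in> S \<longleftrightarrow> y \<notin> S)))"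

definition del_vertex_V :: "'a set \<Rightarrow> 'a \<Rightarrow> 'a set" where
  "del_vertex_V V v = V - {v}"

definition del_vertex_E :: "'a set set \<Rightarrow> 'a \<Rightarrow> 'a set set" where
  "del_vertex_E E v = {e \<in> E. v \<notin> e}"

definition del_edge_E :: "'a set set \<Rightarrow> 'a set \<Rightarrow> 'a set set" where
  "del_edge_E E e = E - {e}"

text \<open>Signed adjacency matrix, vertices ordered increasingly (any ordering gives a
  permutation-similar matrix). The ordinary adjacency matrix is the all-positive signing.\<close>

definition signed_adj_mat :: "'a::linorder set \<Rightarrow> 'a set set \<Rightarrow> ('a set \<Rightarrow> int) \<Rightarrow> complex mat" where
  "signed_adj_mat V E \<pi> =
     (let vs = sorted_list_of_set V in
      mat (card V) (card V)
        (\<lambda>(i, j). if {vs ! i, vs ! j} \<in> E then of_int (\<pi> {vs ! i, vs ! j}) else 0))"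

definition adj_mat :: "'a::linorder set \<Rightarrow> 'a set set \<Rightarrow> complex mat" where
  "adj_mat V E = signed_adj_mat V E (\<lambda>_. 1)"

definition rho :: "'a::linorder set \<Rightarrow> 'a set set \<Rightarrow> real" where
  "rho V E = spectral_radius (adj_mat V E)"

definition rho_signed :: "'a::linorder set \<Rightarrow> 'a set set \<Rightarrow> ('a set \<Rightarrow> int) \<Rightarrow> real" where
  "rho_signed V E \<pi> = spectral_radius (signed_adj_mat V E \<pi>)"

text \<open>Adjacency eigenvalues (with multiplicity, real parts; they are real for a
  symmetric real matrix) in non-increasing order: lambda V E k for k = 1..n.\<close>

definition eigenvalues_desc :: "complex mat \<Rightarrow> real list" where
  "eigenvalues_desc A = rev (sorted_list_of_multiset (image_mset Re (proots (char_poly A))))"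

definition lambda :: "'a::linorder set \<Rightarrow> 'a set set \<Rightarrow> nat \<Rightarrow> real" where
  "lambda V E k = eigenvalues_desc (adj_mat V E) ! (k - 1)"

definition rho_V :: "'a::linorder set \<Rightarrow> 'a set set \<Rightarrow> real" where
  "rho_V V E = Max ((\<lambda>v. rho (del_vertex_V V v) (del_vertex_E E v)) ` V)"

definition rho_E :: "'a::linorder set \<Rightarrow> 'a set set \<Rightarrow> real" where
  "rho_E V E = Max ((\<lambda>e. rho V (del_edge_E E e)) ` E)"

text \<open>Signings: functions with values +-1 on the edges (values off E are irrelevant).\<close>

definition signing :: "'a set set \<Rightarrow> ('a set \<Rightarrow> int) \<Rightarrow> bool" where
  "signing E \<pi> \<longleftrightarrow> (\<forall>e\<in>E. \<pi> e = 1 \<or> \<pi> e = -1)"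

definition Gamma :: "'a::linorder set \<Rightarrow> 'a set set \<Rightarrow> ('a set \<Rightarrow> int) set" where
  "Gamma V E = {\<pi>. signing E \<pi> \<and> rho_signed V E \<pi> < rho V E}"

definition rho_Gamma :: "'a::linorder set \<Rightarrow> 'a set set \<Rightarrow> real" where
  "rho_Gamma V E = Max (rho_signed V E ` Gamma V E)"

end

theory Submission
  imports Defs Jordan_Normal_Form.Jordan_Normal_Form_Uniqueness
begin


lemma mult_mat_vec_sum:
  assumes "C \<in> carrier_mat n n" "v \<in> carrier_vec n" "i < n"
  shows "(C *\<^sub>v v) $ i = (\<Sum>j<n. C $$ (i,j) * v $ j)"
  using assms by (auto simp: scalar_prod_def atLeast0LessThan intro!: sum.cong)

lemma herm_eig_real:
  fixes A :: "complex mat"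
  assumes herm: "\<forall>i<n. \<forall>j<n. cnj (A$$(i,j)) = A$$(j,i)"
    and ev: "\<forall>i<n. (\<Sum>j<n. A$$(i,j) * w j) = a * w i"
    and nz: "i0 < n" "w i0 \<noteq> 0"
  shows "Im a = 0"
proof -
  define L where "L = (\<Sum>i<n. cnj (w i) * (\<Sum>j<n. A$$(i,j) * w j))"
  have "cnj L = (\<Sum>i<n. \<Sum>j<n. w i * cnj (A$$(i,j)) * cnj (w j))"
    unfolding L_def by (simp add: sum_distrib_left mult.assoc)
  also have "\<dots> = (\<Sum>i<n. \<Sum>j<n. w i * A$$(j,i) * cnj (w j))"
    using herm by (intro sum.cong refl) auto
  also have "\<dots> = L" unfolding L_def sum_distrib_left
    by (subst sum.swap) (auto intro!: sum.cong simp: ac_simps)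
  finally have cL: "cnj L = L" .
  have "L = (\<Sum>i<n. cnj (w i) * (a * w i))"
    unfolding L_def using ev by (intro sum.cong refl) auto
  also have "\<dots> = a * (\<Sum>i<n. of_real ((cmod (w i))^2))"
    by (simp only: complex_norm_square sum_distrib_left) (simp add: ac_simps)
  finally have L2: "L = a * (\<Sum>i<n. of_real ((cmod (w i))^2))" .
  define s where "s = (\<Sum>i<n. (cmod (w i))^2)"
  have "s \<ge> (cmod (w i0))^2" unfolding s_def
    using nz by (intro member_le_sum) auto
  moreover have "(cmod (w i0))^2 > 0" using nz by auto
  ultimately have s: "s > 0" by linarith
  have L3: "L = a * of_real s" unfolding L2 s_def by simp
  from cL[unfolded L3] have "cnj a * of_real s = a * of_real s" by simp
  hence "cnj a = a" using s by (metis mult_cancel_right of_real_eq_0_iff less_irrefl)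
  thus ?thesis by (metis Reals_cnj_iff complex_is_Real_iff)
qed

lemma herm_ker2:
  fixes A :: "complex mat"
  assumes A: "A \<in> carrier_mat n n" and herm: "\<forall>i<n. \<forall>j<n. cnj (A$$(i,j)) = A$$(j,i)"
    and y: "y \<in> carrier_vec n"
    and C: "C = char_matrix A a"
    and z: "C *\<^sub>v (C *\<^sub>v y) = 0\<^sub>v n"
  shows "C *\<^sub>v y = 0\<^sub>v n"
proof (rule ccontr)
  assume ne: "C *\<^sub>v y \<noteq> 0\<^sub>v n"
  have Cc: "C \<in> carrier_mat n n" using A C by auto
  define w where "w = (\<lambda>i. (C *\<^sub>v y) $ i)"
  have Cij: "\<And>i j. i < n \<Longrightarrow> j < n \<Longrightarrow> C $$ (i,j) = A $$ (i,j) - (if i = j then a else 0)"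
    using A unfolding C char_matrix_def by auto
  have wv: "C *\<^sub>v y \<in> carrier_vec n" using Cc y by auto
  from ne wv obtain i0 where i0: "i0 < n" "w i0 \<noteq> 0" unfolding w_def
    by (metis eq_vecI carrier_vecD index_zero_vec(1) index_zero_vec(2))
  have Cw: "\<And>i. i < n \<Longrightarrow> (\<Sum>j<n. C $$ (i,j) * w j) = 0"
  proof -
    fix i assume i: "i < n"
    have "(C *\<^sub>v (C *\<^sub>v y)) $ i = 0" using z i by simp
    thus "(\<Sum>j<n. C $$ (i,j) * w j) = 0" using mult_mat_vec_sum[OF Cc wv i] unfolding w_def by simp
  qed
  have ev: "\<forall>i<n. (\<Sum>j<n. A$$(i,j) * w j) = a * w i"
  proof (intro allI impI)
    fix i assume i: "i < n"
    have "(\<Sum>j<n. C $$ (i,j) * w j) = (\<Sum>j<n. A $$ (i,j) * w j - (if i = j then a * w j else 0))"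
      using i by (intro sum.cong refl) (simp add: Cij ring_distribs)
    also have "\<dots> = (\<Sum>j<n. A $$ (i,j) * w j) - a * w i"
      using i by (simp add: sum_subtractf)
    finally show "(\<Sum>j<n. A$$(i,j) * w j) = a * w i" using Cw[OF i] by simp
  qed
  have ar: "Im a = 0" by (rule herm_eig_real[OF herm ev i0])
  hence ca: "cnj a = a" by (simp add: complex_eq_iff)
  have Cherm: "\<And>i j. i < n \<Longrightarrow> j < n \<Longrightarrow> cnj (C $$ (i,j)) = C $$ (j,i)"
    using Cij herm ca by auto
  have "(\<Sum>i<n. cnj (w i) * w i) = (\<Sum>i<n. cnj (w i) * (\<Sum>j<n. C$$(i,j) * y $ j))"
    unfolding w_def using mult_mat_vec_sum[OF Cc y] by simp
  also have "\<dots> = (\<Sum>j<n. (\<Sum>i<n. cnj (w i) * C$$(i,j)) * y $ j)"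
    by (simp add: sum_distrib_left sum_distrib_right ac_simps) (subst sum.swap, simp)
  also have "\<dots> = (\<Sum>j<n. cnj (\<Sum>i<n. C$$(j,i) * w i) * y $ j)"
    using Cherm by (intro sum.cong refl) (auto simp: mult.commute)
  also have "\<dots> = 0" using Cw by simp
  finally have "(\<Sum>i<n. cnj (w i) * w i) = 0" .
  hence "(\<Sum>i<n. (cmod (w i))^2) = 0"
    by (metis (no_types, lifting) complex_norm_square mult.commute of_real_eq_0_iff of_real_sum sum.cong)
  hence "(cmod (w i0))^2 = 0" using i0 by (subst (asm) sum_nonneg_eq_0_iff) auto
  thus False using i0 by simp
qed

lemma herm_ker_pow:
  fixes A :: "complex mat"
  assumes A: "A \<in> carrier_mat n n" and herm: "\<forall>i<n. \<forall>j<n. cnj (A$$(i,j)) = A$$(j,i)"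
  shows "mat_kernel (char_matrix A a ^\<^sub>m Suc k) = mat_kernel (char_matrix A a)"
proof -
  define C where "C = char_matrix A a"
  have Cc: "C \<in> carrier_mat n n" using A C_def by auto
  have pc: "\<And>k. C ^\<^sub>m k \<in> carrier_mat n n" using Cc by auto
  have key: "\<And>x. x \<in> carrier_vec n \<Longrightarrow> (C ^\<^sub>m Suc k *\<^sub>v x = 0\<^sub>v n) = (C *\<^sub>v x = 0\<^sub>v n)"
  proof (induct k)
    case 0
    then show ?case using Cc by auto
  next
    case (Suc k)
    have "C ^\<^sub>m Suc (Suc k) *\<^sub>v x = (C ^\<^sub>m Suc k * C) *\<^sub>v x"
      by (simp only: pow_mat.simps)
    also have "\<dots> = C ^\<^sub>m Suc k *\<^sub>v (C *\<^sub>v x)"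
      by (rule assoc_mult_mat_vec[OF pc Cc Suc(2)])
    finally have "C ^\<^sub>m Suc (Suc k) *\<^sub>v x = C ^\<^sub>m Suc k *\<^sub>v (C *\<^sub>v x)" .
    moreover have "C *\<^sub>v x \<in> carrier_vec n" using Cc Suc(2) by auto
    ultimately have "(C ^\<^sub>m Suc (Suc k) *\<^sub>v x = 0\<^sub>v n) = (C *\<^sub>v (C *\<^sub>v x) = 0\<^sub>v n)"
      using Suc(1) by simp
    also have "\<dots> = (C *\<^sub>v x = 0\<^sub>v n)"
      using herm_ker2[OF A herm Suc(2) C_def] Cc Suc(2) by auto
    finally show ?case .
  qed
  have "mat_kernel (C ^\<^sub>m Suc k) = {x. x \<in> carrier_vec n \<and> C ^\<^sub>m Suc k *\<^sub>v x = 0\<^sub>v n}"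
    by (rule mat_kernel[OF pc])
  also have "\<dots> = {x. x \<in> carrier_vec n \<and> C *\<^sub>v x = 0\<^sub>v n}" using key by blast
  also have "\<dots> = mat_kernel C" by (rule mat_kernel[OF Cc, symmetric])
  finally show ?thesis unfolding C_def .
qed

lemma herm_dim_gen:
  fixes A :: "complex mat"
  assumes A: "A \<in> carrier_mat n n" and herm: "\<forall>i<n. \<forall>j<n. cnj (A$$(i,j)) = A$$(j,i)"
  shows "dim_gen_eigenspace A a (Suc k) = dim_gen_eigenspace A a 1"
proof -
  have "char_matrix A a ^\<^sub>m 1 = char_matrix A a" using A by simp
  have d1: "dim_col (char_matrix A a ^\<^sub>m Suc k) = n" "dim_col (char_matrix A a ^\<^sub>m 1) = n" using A by (auto simp: char_matrix_def)
  show ?thesis unfolding dim_gen_eigenspace_def kernel_dim_def d1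
    using herm_ker_pow[OF A herm, of a k] herm_ker_pow[OF A herm, of a 0] by simp
qed

lemma sum_list_ge_len: "(\<forall>x\<in>set xs. (1::nat) \<le> x) \<Longrightarrow> sum_list xs \<ge> length xs"
  by (induct xs) auto

lemma sum_list_ones: "(\<forall>x\<in>set xs. (1::nat) \<le> x) \<Longrightarrow> sum_list xs = length xs \<Longrightarrow> \<forall>x\<in>set xs. x = 1"
proof (induct xs)
  case (Cons a xs)
  have "sum_list xs \<ge> length xs" using Cons(2) by (intro sum_list_ge_len) auto
  then show ?case using Cons by auto
qed simp

lemma herm_blocks:
  fixes A :: "complex mat"
  assumes A: "A \<in> carrier_mat n n" and herm: "\<forall>i<n. \<forall>j<n. cnj (A$$(i,j)) = A$$(j,i)"
    and jnf: "jordan_nf A n_as"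
  shows "\<forall>p\<in>set n_as. fst p = 1"
proof
  fix p assume p: "p \<in> set n_as"
  obtain m e where pe: "p = (m,e)" by force
  from jnf have sim: "similar_mat A (jordan_matrix n_as)" and z: "0 \<notin> fst ` set n_as"
    unfolding jordan_nf_def by auto
  from similar_matD[OF sim] obtain N where "A \<in> carrier_mat N N" "jordan_matrix n_as \<in> carrier_mat N N" by auto
  hence sn: "sum_list (map fst n_as) = n" using A unfolding carrier_mat_def by auto
  define xs where "xs = map fst [(m, e')\<leftarrow>n_as . e' = e]"
  have xs_le: "\<forall>x\<in>set xs. 1 \<le> x \<and> x \<le> n"
  proof
    fix x assume "x \<in> set xs"
    then obtain e' where x: "(x,e') \<in> set n_as" unfolding xs_def by auto
    hence "x \<noteq> 0" using z by force
    moreover have "x \<le> sum_list (map fst n_as)"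
      by (rule member_le_sum_list) (use x in force, simp)
    ultimately show "1 \<le> x \<and> x \<le> n" using sn by auto
  qed
  have "dim_gen_eigenspace A e (Suc n) = dim_gen_eigenspace A e 1" by (rule herm_dim_gen[OF A herm])
  hence "(\<Sum>x\<leftarrow>xs. min (Suc n) x) = (\<Sum>x\<leftarrow>xs. min 1 x)"
    unfolding dim_gen_eigenspace[OF jnf] xs_def by simp
  moreover have "map (min (Suc n)) xs = xs" using xs_le by (induct xs) auto
  moreover have "sum_list (map (min 1) xs) = length xs" using xs_le by (induct xs) auto
  ultimately have "sum_list xs = length xs" by simp
  from sum_list_ones[OF _ this] xs_le have "\<forall>x\<in>set xs. x = 1" by auto
  moreover have "m \<in> set xs" using p pe unfolding xs_def by force
  ultimately show "fst p = 1" using pe by auto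
qed

lemma jordan_matrix_diag:
  "(\<forall>p\<in>set n_as. fst p = 1) \<Longrightarrow> jordan_matrix n_as =
     mat (length n_as) (length n_as) (\<lambda>(i,j). if i = j then snd (n_as ! i) else 0)"
proof (induct n_as)
  case Nil
  show ?case unfolding jordan_matrix_def by (intro eq_matI) auto
next
  case (Cons p n_as)
  obtain m a where p: "p = (m,a)" by force
  with Cons have m: "m = 1" by auto
  have IH: "jordan_matrix n_as = mat (length n_as) (length n_as) (\<lambda>(i,j). if i = j then snd (n_as ! i) else 0)"
    using Cons by auto
  have sl: "sum_list (map fst n_as) = length n_as" using Cons(2)
    by (induct n_as) auto
  show ?case unfolding p m jordan_matrix_Cons sl IH
    by (intro eq_matI) (auto simp: jordan_block_def nth_Cons')
qed

lemma herm_diag: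
  fixes A :: "complex mat"
  assumes A: "A \<in> carrier_mat n n" and herm: "\<forall>i<n. \<forall>j<n. cnj (A$$(i,j)) = A$$(j,i)"
  shows "\<exists>P Q dd. P \<in> carrier_mat n n \<and> Q \<in> carrier_mat n n \<and> P * Q = 1\<^sub>m n \<and> Q * P = 1\<^sub>m n
     \<and> A * P = P * mat n n (\<lambda>(i,j). if i = j then dd i else 0)
     \<and> char_poly A = (\<Prod>k\<leftarrow>[0..<n]. [:- dd k, 1:])"
proof -
  from char_poly_factorized[OF A] obtain as where "char_poly A = (\<Prod>a\<leftarrow>as. [:- a, 1:])" by auto
  from jordan_nf_exists[OF A this] obtain n_as where jnf: "jordan_nf A n_as" by auto
  have ones: "\<forall>p\<in>set n_as. fst p = 1" by (rule herm_blocks[OF A herm jnf])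
  from jnf have sim: "similar_mat A (jordan_matrix n_as)" unfolding jordan_nf_def by auto
  from similar_matD[OF sim] obtain N where "A \<in> carrier_mat N N" "jordan_matrix n_as \<in> carrier_mat N N" by auto
  hence sn: "sum_list (map fst n_as) = n" using A unfolding carrier_mat_def by auto
  have sl: "sum_list (map fst n_as) = length n_as" using ones by (induct n_as) auto
  define dd where "dd = (\<lambda>k. snd (n_as ! k))"
  define D where "D = mat n n (\<lambda>(i,j). if i = j then dd i else 0)"
  have JD: "jordan_matrix n_as = D" unfolding D_def dd_def jordan_matrix_diag[OF ones]
    using sn sl by simp
  from sim[unfolded similar_mat_def similar_mat_wit_def JD] obtain P Q where
    PQ: "{A, D, P, Q} \<subseteq> carrier_mat n n" "P * Q = 1\<^sub>m n" "Q * P = 1\<^sub>m n" "A = P * D * Q"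
    using A by (auto simp: Let_def)
  have P: "P \<in> carrier_mat n n" and Q: "Q \<in> carrier_mat n n" and Dc: "D \<in> carrier_mat n n" using PQ by auto
  have "A * P = P * D * Q * P" using PQ by simp
  also have "\<dots> = P * D * (Q * P)" using P Q Dc by (simp add: assoc_mult_mat[of _ n n _ n _ n])
  also have "\<dots> = P * D" using PQ P Dc by simp
  finally have AP: "A * P = P * D" .
  have "char_poly A = (\<Prod>(m, a)\<leftarrow>n_as. [:- a, 1:] ^ m)" by (rule jordan_nf_char_poly[OF jnf])
  also have "\<dots> = (\<Prod>p\<leftarrow>n_as. [:- snd p, 1:])" using ones
    by (induct n_as) (auto split: prod.splits)
  also have "\<dots> = (\<Prod>k\<leftarrow>[0..<n]. [:- dd k, 1:])"
  proof -
    have "n_as = map (\<lambda>k. n_as ! k) [0..<n]" using sn sl by (metis map_nth)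
    hence "map (\<lambda>p. [:- snd p, 1:]) n_as = map (\<lambda>k. [:- dd k, 1:]) [0..<n]" unfolding dd_def
      by (metis (no_types, lifting) map_eq_conv map_map o_apply)
    thus ?thesis by simp
  qed
  finally show ?thesis using P Q PQ AP unfolding D_def by blast
qed


lemma sum_swap3a: "(\<Sum>i<n. \<Sum>l<n. \<Sum>k<n. f i l k) = (\<Sum>l<n. \<Sum>k<n. \<Sum>i<(n::nat). f i l k)"
proof -
  have "(\<Sum>i<n. \<Sum>l<n. \<Sum>k<n. f i l k) = (\<Sum>l<n. \<Sum>i<n. \<Sum>k<n. f i l k)" by (rule sum.swap)
  also have "\<dots> = (\<Sum>l<n. \<Sum>k<n. \<Sum>i<n. f i l k)" by (rule sum.cong[OF refl], rule sum.swap)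
  finally show ?thesis .
qed

lemma psd_lemma:
  fixes h p q :: "nat \<Rightarrow> nat \<Rightarrow> complex" and b :: "nat \<Rightarrow> real" and x :: "nat \<Rightarrow> complex"
  assumes herm: "\<forall>i<n. \<forall>j<n. cnj (h i j) = h j i"
    and hp: "\<forall>i<n. \<forall>k<n. (\<Sum>j<n. h i j * p j k) = p i k * of_real (b k)"
    and pq: "\<forall>i<n. \<forall>j<n. (\<Sum>k<n. p i k * q k j) = (if i = j then 1 else 0)"
    and b: "\<forall>k<n. b k \<ge> 0"
  shows "(\<Sum>i<n. cnj (x i) * (\<Sum>j<n. h i j * x j)) = of_real (\<Sum>i<n. (cmod (\<Sum>k<n. p i k * of_real (sqrt (b k)) * (\<Sum>j<n. q k j * x j)))^2)"
proof -
  define c where "c = (\<lambda>k. \<Sum>j<n. q k j * x j)"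
  define G where "G = (\<lambda>l k. \<Sum>i<n. cnj (p i l) * p i k)"
  define sb where "sb = (\<lambda>k. complex_of_real (sqrt (b k)))"
  have xc: "\<And>i. i < n \<Longrightarrow> x i = (\<Sum>k<n. p i k * c k)"
  proof -
    fix i assume i: "i < n"
    have "(\<Sum>k<n. p i k * c k) = (\<Sum>k<n. \<Sum>j<n. p i k * q k j * x j)"
      unfolding c_def by (simp add: sum_distrib_left mult.assoc)
    also have "\<dots> = (\<Sum>j<n. (\<Sum>k<n. p i k * q k j) * x j)"
      by (subst sum.swap) (simp add: sum_distrib_right)
    also have "\<dots> = (\<Sum>j<n. (if i = j then x j else 0))"
      using pq i by (intro sum.cong refl) auto
    also have "\<dots> = x i" using i by simp
    finally show "x i = (\<Sum>k<n. p i k * c k)" by simp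
  qed
  have hx: "\<And>i. i < n \<Longrightarrow> (\<Sum>j<n. h i j * x j) = (\<Sum>k<n. p i k * of_real (b k) * c k)"
  proof -
    fix i assume i: "i < n"
    have "(\<Sum>j<n. h i j * x j) = (\<Sum>j<n. h i j * (\<Sum>k<n. p j k * c k))"
      using xc by (intro sum.cong refl) auto
    also have "\<dots> = (\<Sum>k<n. (\<Sum>j<n. h i j * p j k) * c k)"
      by (simp add: sum_distrib_left sum_distrib_right mult.assoc) (subst sum.swap, simp)
    also have "\<dots> = (\<Sum>k<n. p i k * of_real (b k) * c k)"
      using hp i by (intro sum.cong refl) auto
    finally show "?thesis i" .
  qed
  have orth: "\<And>l k. l < n \<Longrightarrow> k < n \<Longrightarrow> b k \<noteq> b l \<Longrightarrow> G l k = 0"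
  proof -
    fix l k assume l: "l < n" and k: "k < n" and ne: "b k \<noteq> b l"
    have "(\<Sum>i<n. cnj (p i l) * (\<Sum>j<n. h i j * p j k)) = (\<Sum>i<n. cnj (p i l) * (p i k * of_real (b k)))"
      using hp k by (intro sum.cong refl) auto
    also have "\<dots> = of_real (b k) * G l k" unfolding G_def by (simp add: sum_distrib_left ac_simps)
    finally have e1: "(\<Sum>i<n. cnj (p i l) * (\<Sum>j<n. h i j * p j k)) = of_real (b k) * G l k" .
    have "(\<Sum>i<n. cnj (p i l) * (\<Sum>j<n. h i j * p j k)) = (\<Sum>j<n. (\<Sum>i<n. cnj (p i l) * h i j) * p j k)"
      by (simp add: sum_distrib_left sum_distrib_right mult.assoc) (subst sum.swap, simp)
    also have "\<dots> = (\<Sum>j<n. cnj (\<Sum>i<n. h j i * p i l) * p j k)"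
    proof (intro sum.cong refl)
      fix j assume j: "j \<in> {..<n}"
      have "(\<Sum>i<n. cnj (p i l) * h i j) = cnj (\<Sum>i<n. h j i * p i l)"
        using herm j by (simp add: mult.commute)
      thus "(\<Sum>i<n. cnj (p i l) * h i j) * p j k = cnj (\<Sum>i<n. h j i * p i l) * p j k" by simp
    qed
    also have "\<dots> = (\<Sum>j<n. cnj (p j l * of_real (b l)) * p j k)"
      using hp l by (intro sum.cong refl) auto
    also have "\<dots> = of_real (b l) * G l k" unfolding G_def by (simp add: sum_distrib_left ac_simps)
    finally have "of_real (b k) * G l k = of_real (b l) * G l k" using e1 by simp
    hence "(of_real (b k) - of_real (b l)) * G l k = 0" by (simp add: algebra_simps)
    thus "G l k = 0" using ne by simp
  qed
  have bG: "\<And>l k. l < n \<Longrightarrow> k < n \<Longrightarrow> of_real (b k) * G l k = cnj (sb l) * sb k * G l k"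
  proof -
    fix l k assume l: "l < n" and k: "k < n"
    show "of_real (b k) * G l k = cnj (sb l) * sb k * G l k"
    proof (cases "b k = b l")
      case True
      have bk: "b k \<ge> 0" using b k by auto
      have "sqrt (b l) * sqrt (b k) = b k" using True bk by simp
      hence "of_real (sqrt (b l)) * of_real (sqrt (b k)) = (of_real (b k)::complex)" by (metis of_real_mult)
      thus ?thesis by (simp add: sb_def)
    next
      case False thus ?thesis using orth[OF l k] by simp
    qed
  qed
  have "(\<Sum>i<n. cnj (x i) * (\<Sum>j<n. h i j * x j))
      = (\<Sum>i<n. cnj (\<Sum>l<n. p i l * c l) * (\<Sum>k<n. p i k * of_real (b k) * c k))"
    using xc hx by (intro sum.cong refl) auto
  also have "\<dots> = (\<Sum>i<n. \<Sum>l<n. \<Sum>k<n. cnj (c l) * c k * (of_real (b k) * (cnj (p i l) * p i k)))"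
    by (rule sum.cong[OF refl], simp only: cnj_sum sum_distrib_right sum_distrib_left,
      subst sum.swap, intro sum.cong refl, simp add: ac_simps)
  also have "\<dots> = (\<Sum>l<n. \<Sum>k<n. \<Sum>i<n. cnj (c l) * c k * (of_real (b k) * (cnj (p i l) * p i k)))"
    by (rule sum_swap3a)
  also have "\<dots> = (\<Sum>l<n. \<Sum>k<n. cnj (c l) * c k * (of_real (b k) * G l k))"
    unfolding G_def by (simp only: sum_distrib_left)
  also have "\<dots> = (\<Sum>l<n. \<Sum>k<n. cnj (c l) * c k * (cnj (sb l) * sb k * G l k))"
    using bG by (intro sum.cong refl) auto
  also have "\<dots> = (\<Sum>l<n. \<Sum>k<n. \<Sum>i<n. cnj (p i l * sb l * c l) * (p i k * sb k * c k))"
    unfolding G_def sum_distrib_left by (intro sum.cong refl) (simp add: ac_simps)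
  also have "\<dots> = (\<Sum>i<n. \<Sum>l<n. \<Sum>k<n. cnj (p i l * sb l * c l) * (p i k * sb k * c k))"
    by (rule sum_swap3a[symmetric])
  also have "\<dots> = (\<Sum>i<n. cnj (\<Sum>l<n. p i l * sb l * c l) * (\<Sum>k<n. p i k * sb k * c k))"
    by (rule sum.cong[OF refl], simp only: cnj_sum sum_distrib_right sum_distrib_left, rule sum.swap)
  also have "\<dots> = (\<Sum>i<n. of_real ((cmod (\<Sum>k<n. p i k * sb k * c k))^2))"
    by (simp only: complex_norm_square) (simp add: ac_simps)
  finally show ?thesis unfolding c_def sb_def by simp
qed


definition quad :: "nat \<Rightarrow> (nat \<Rightarrow> nat \<Rightarrow> real) \<Rightarrow> (nat \<Rightarrow> real) \<Rightarrow> real" where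
  "quad n M x = (\<Sum>i<n. \<Sum>j<n. x i * M i j * x j)"
definition nrm :: "nat \<Rightarrow> (nat \<Rightarrow> real) \<Rightarrow> real" where
  "nrm n x = (\<Sum>i<n. (x i)^2)"
definition cmat :: "nat \<Rightarrow> (nat \<Rightarrow> nat \<Rightarrow> real) \<Rightarrow> complex mat" where
  "cmat n M = mat n n (\<lambda>(i,j). complex_of_real (M i j))"
definition eigv :: "nat \<Rightarrow> (nat \<Rightarrow> nat \<Rightarrow> real) \<Rightarrow> real \<Rightarrow> (nat \<Rightarrow> real) \<Rightarrow> bool" where
  "eigv n M e x \<longleftrightarrow> (\<exists>i<n. x i \<noteq> 0) \<and> (\<forall>i<n. (\<Sum>j<n. M i j * x j) = e * x i)"

lemma mult_mat_sum:
  assumes "X \<in> carrier_mat n n" "Y \<in> carrier_mat n n" "i < n" "j < n"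
  shows "(X * Y) $$ (i,j) = (\<Sum>k<n. X $$ (i,k) * Y $$ (k,j))"
  using assms by (auto simp: scalar_prod_def atLeast0LessThan intro!: sum.cong)

lemma ceig_to_real:
  fixes z :: "nat \<Rightarrow> complex"
  assumes ev: "\<forall>i<n. (\<Sum>j<n. complex_of_real (M i j) * z j) = complex_of_real e * z i"
    and nz: "i1 < n" "z i1 \<noteq> 0"
  shows "\<exists>x. eigv n M e x \<and> (\<forall>i. z i = 0 \<longrightarrow> x i = 0)"
proof -
  have re: "\<forall>i<n. (\<Sum>j<n. M i j * Re (z j)) = e * Re (z i)"
  proof (intro allI impI)
    fix i assume i: "i < n"
    have "Re (\<Sum>j<n. complex_of_real (M i j) * z j) = Re (complex_of_real e * z i)" using ev i by simp
    thus "(\<Sum>j<n. M i j * Re (z j)) = e * Re (z i)" by (simp add: Re_sum)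
  qed
  have im: "\<forall>i<n. (\<Sum>j<n. M i j * Im (z j)) = e * Im (z i)"
  proof (intro allI impI)
    fix i assume i: "i < n"
    have "Im (\<Sum>j<n. complex_of_real (M i j) * z j) = Im (complex_of_real e * z i)" using ev i by simp
    thus "(\<Sum>j<n. M i j * Im (z j)) = e * Im (z i)" by (simp add: Im_sum)
  qed
  show ?thesis
  proof (cases "Re (z i1) = 0")
    case True
    hence "Im (z i1) \<noteq> 0" using nz complex_eq_iff by auto
    thus ?thesis using im nz unfolding eigv_def by (intro exI[of _ "\<lambda>i. Im (z i)"]) auto
  next
    case False
    thus ?thesis using re nz unfolding eigv_def by (intro exI[of _ "\<lambda>i. Re (z i)"]) auto
  qed
qed

lemma quad_shift:
  fixes M :: "nat \<Rightarrow> nat \<Rightarrow> real"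
  shows "(\<Sum>i<n. x i * (\<Sum>j<n. ((if i = j then \<mu> else 0) - M i j) * x j)) = \<mu> * nrm n x - quad n M x"
proof -
  have "\<And>i. i < n \<Longrightarrow> (\<Sum>j<n. ((if i = j then \<mu> else 0) - M i j) * x j) = \<mu> * x i - (\<Sum>j<n. M i j * x j)"
  proof -
    fix i assume i: "i < n"
    have "(\<Sum>j<n. ((if i = j then \<mu> else 0) - M i j) * x j) = (\<Sum>j<n. (if i = j then \<mu> * x j else 0)) - (\<Sum>j<n. M i j * x j)"
      by (subst sum_subtractf[symmetric]) (intro sum.cong refl, auto simp: algebra_simps)
    also have "(\<Sum>j<n. (if i = j then \<mu> * x j else 0)) = \<mu> * x i" using i by simp
    finally show "?thesis i" .
  qed
  hence "(\<Sum>i<n. x i * (\<Sum>j<n. ((if i = j then \<mu> else 0) - M i j) * x j))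
     = (\<Sum>i<n. \<mu> * (x i)^2 - (\<Sum>j<n. x i * M i j * x j))"
    by (intro sum.cong refl) (auto simp: right_diff_distrib power2_eq_square sum_distrib_left ac_simps)
  thus ?thesis unfolding nrm_def quad_def by (simp add: sum_subtractf sum_distrib_left)
qed

lemma quad_shift2:
  fixes M :: "nat \<Rightarrow> nat \<Rightarrow> real"
  shows "(\<Sum>i<n. x i * (\<Sum>j<n. (M i j - (if i = j then \<mu> else 0)) * x j)) = quad n M x - \<mu> * nrm n x"
proof -
  have "(\<Sum>i<n. x i * (\<Sum>j<n. (M i j - (if i = j then \<mu> else 0)) * x j))
    = - (\<Sum>i<n. x i * (\<Sum>j<n. ((if i = j then \<mu> else 0) - M i j) * x j))"
    by (simp add: sum_negf[symmetric] left_diff_distrib sum_subtractf right_diff_distrib)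
  thus ?thesis unfolding quad_shift by simp
qed

lemma spec_real:
  fixes M :: "nat \<Rightarrow> nat \<Rightarrow> real"
  assumes symm: "\<forall>i<n. \<forall>j<n. M i j = M j i"
  shows "\<exists>d. char_poly (cmat n M) = (\<Prod>k\<leftarrow>[0..<n]. [:- complex_of_real (d k), 1:])
     \<and> (\<forall>k<n. \<exists>x. eigv n M (d k) x)
     \<and> (\<forall>k l i0. k < n \<longrightarrow> l < n \<longrightarrow> k \<noteq> l \<longrightarrow> d k = d l \<longrightarrow> i0 < n \<longrightarrow> (\<exists>x. eigv n M (d k) x \<and> x i0 = 0))
     \<and> (\<forall>\<mu>. (\<forall>k<n. d k \<le> \<mu>) \<longrightarrow> (\<forall>x. quad n M x \<le> \<mu> * nrm n x))
     \<and> (\<forall>\<mu>. (\<forall>k<n. \<mu> \<le> d k) \<longrightarrow> (\<forall>x. \<mu> * nrm n x \<le> quad n M x))"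
proof -
  define A where "A = cmat n M"
  have A: "A \<in> carrier_mat n n" unfolding A_def cmat_def by auto
  have Aij: "\<And>i j. i < n \<Longrightarrow> j < n \<Longrightarrow> A$$(i,j) = complex_of_real (M i j)"
    unfolding A_def cmat_def by auto
  have herm: "\<forall>i<n. \<forall>j<n. cnj (A$$(i,j)) = A$$(j,i)" using symm by (simp add: Aij)
  from herm_diag[OF A herm] obtain P Q dd where P: "P \<in> carrier_mat n n" and Q: "Q \<in> carrier_mat n n"
    and PQ: "P * Q = 1\<^sub>m n" and QP: "Q * P = 1\<^sub>m n"
    and AP: "A * P = P * mat n n (\<lambda>(i,j). if i = j then dd i else 0)"
    and cp: "char_poly A = (\<Prod>k\<leftarrow>[0..<n]. [:- dd k, 1:])" by blast
  define p where "p = (\<lambda>i j. P$$(i,j))"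
  define q where "q = (\<lambda>i j. Q$$(i,j))"
  have E1: "\<And>i k. i < n \<Longrightarrow> k < n \<Longrightarrow> (\<Sum>j<n. A$$(i,j) * p j k) = dd k * p i k"
  proof -
    fix i k assume i: "i < n" and k: "k < n"
    define Dm where "Dm = mat n n (\<lambda>(i,j). if i = j then dd i else (0::complex))"
    have Dm: "Dm \<in> carrier_mat n n" unfolding Dm_def by auto
    have "(A*P)$$(i,k) = (\<Sum>j<n. A$$(i,j) * P$$(j,k))" by (rule mult_mat_sum[OF A P i k])
    moreover have "(P * Dm)$$(i,k) = (\<Sum>j<n. P$$(i,j) * Dm$$(j,k))" by (rule mult_mat_sum[OF P Dm i k])
    moreover have "(\<Sum>j<n. P$$(i,j) * Dm$$(j,k)) = (\<Sum>j<n. if j = k then P$$(i,k) * dd k else 0)"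
      using k unfolding Dm_def by (intro sum.cong refl) auto
    moreover have "(\<Sum>j<n. if j = k then P$$(i,k) * dd k else 0) = P$$(i,k) * dd k" using k by simp
    ultimately show "(\<Sum>j<n. A$$(i,j) * p j k) = dd k * p i k"
      using AP unfolding Dm_def p_def by (simp add: mult.commute)
  qed
  have E2: "\<And>i j. i < n \<Longrightarrow> j < n \<Longrightarrow> (\<Sum>k<n. p i k * q k j) = (if i = j then 1 else 0)"
    using mult_mat_sum[OF P Q] PQ unfolding p_def q_def by (metis index_one_mat(1))
  have E3: "\<And>i j. i < n \<Longrightarrow> j < n \<Longrightarrow> (\<Sum>k<n. q i k * p k j) = (if i = j then 1 else 0)"
    using mult_mat_sum[OF Q P] QP unfolding p_def q_def by (metis index_one_mat(1))
  have colnz: "\<And>k. k < n \<Longrightarrow> \<exists>i<n. p i k \<noteq> 0"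
  proof (rule ccontr)
    fix k assume k: "k < n" and "\<not> (\<exists>i<n. p i k \<noteq> 0)"
    hence "(\<Sum>i<n. q k i * p i k) = 0" by auto
    with E3[OF k k] show False by simp
  qed
  have ddreal: "\<And>k. k < n \<Longrightarrow> dd k = complex_of_real (Re (dd k))"
  proof -
    fix k assume k: "k < n"
    from colnz[OF k] obtain i0 where i0: "i0 < n" "p i0 k \<noteq> 0" by auto
    have ev: "\<forall>i<n. (\<Sum>j<n. A$$(i,j) * (\<lambda>i. p i k) j) = dd k * (\<lambda>i. p i k) i"
      using E1 k by auto
    have "Im (dd k) = 0"
      by (rule herm_eig_real[OF herm ev, of i0]) (use i0 in auto)
    thus "dd k = complex_of_real (Re (dd k))" by (simp add: complex_eq_iff)
  qed
  define d where "d = (\<lambda>k. Re (dd k))"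
  have E1': "\<And>i k. i < n \<Longrightarrow> k < n \<Longrightarrow> (\<Sum>j<n. complex_of_real (M i j) * p j k) = complex_of_real (d k) * p i k"
  proof -
    fix i k assume i: "i < n" and k: "k < n"
    have "(\<Sum>j<n. complex_of_real (M i j) * p j k) = (\<Sum>j<n. A$$(i,j) * p j k)"
      using i by (intro sum.cong refl) (auto simp: Aij)
    also have "\<dots> = complex_of_real (d k) * p i k" using E1[OF i k] ddreal[OF k] unfolding d_def by simp
    finally show "?thesis i k" .
  qed
  have C1: "char_poly (cmat n M) = (\<Prod>k\<leftarrow>[0..<n]. [:- complex_of_real (d k), 1:])"
  proof -
    have "map (\<lambda>k. [:- dd k, 1:]) [0..<n] = map (\<lambda>k. [:- complex_of_real (d k), 1:]) [0..<n]"
      using ddreal unfolding d_def by (intro map_cong refl) auto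
    thus ?thesis using cp unfolding A_def by (simp only:)
  qed
  have C2: "\<forall>k<n. \<exists>x. eigv n M (d k) x"
  proof (intro allI impI)
    fix k assume k: "k < n"
    from colnz[OF k] obtain i1 where i1: "i1 < n" "p i1 k \<noteq> 0" by auto
    have ev: "\<forall>i<n. (\<Sum>j<n. complex_of_real (M i j) * (\<lambda>i. p i k) j) = complex_of_real (d k) * (\<lambda>i. p i k) i"
      using E1' k by auto
    from ceig_to_real[OF ev, of i1] i1 show "\<exists>x. eigv n M (d k) x" by auto
  qed
  have C3: "\<forall>k l i0. k < n \<longrightarrow> l < n \<longrightarrow> k \<noteq> l \<longrightarrow> d k = d l \<longrightarrow> i0 < n \<longrightarrow> (\<exists>x. eigv n M (d k) x \<and> x i0 = 0)"
  proof (intro allI impI)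
    fix k l i0 assume k: "k < n" and l: "l < n" and kl: "k \<noteq> l" and dkl: "d k = d l" and i0: "i0 < n"
    show "\<exists>x. eigv n M (d k) x \<and> x i0 = 0"
    proof (cases "p i0 l = 0 \<and> p i0 k = 0")
      case True
      from colnz[OF k] obtain i1 where i1: "i1 < n" "p i1 k \<noteq> 0" by auto
      have ev: "\<forall>i<n. (\<Sum>j<n. complex_of_real (M i j) * (\<lambda>i. p i k) j) = complex_of_real (d k) * (\<lambda>i. p i k) i"
        using E1' k by auto
      from ceig_to_real[OF ev, of i1] i1 True show ?thesis by auto
    next
      case False
      define z where "z = (\<lambda>i. p i0 l * p i k - p i0 k * p i l)"
      have ev: "\<forall>i<n. (\<Sum>j<n. complex_of_real (M i j) * z j) = complex_of_real (d k) * z i"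
      proof (intro allI impI)
        fix i assume i: "i < n"
        have "(\<Sum>j<n. complex_of_real (M i j) * z j)
           = p i0 l * (\<Sum>j<n. complex_of_real (M i j) * p j k) - p i0 k * (\<Sum>j<n. complex_of_real (M i j) * p j l)"
          unfolding z_def by (simp add: sum_distrib_left sum_subtractf algebra_simps)
        also have "\<dots> = complex_of_real (d k) * z i" using E1'[OF i k] E1'[OF i l] dkl
          unfolding z_def by (simp add: algebra_simps)
        finally show "(\<Sum>j<n. complex_of_real (M i j) * z j) = complex_of_real (d k) * z i" .
      qed
      have "\<exists>i1<n. z i1 \<noteq> 0"
      proof (rule ccontr)
        assume "\<not> (\<exists>i1<n. z i1 \<noteq> 0)"
        hence z0: "\<forall>i<n. z i = 0" by auto
        have "\<And>m. m < n \<Longrightarrow> (\<Sum>i<n. q m i * z i) = p i0 l * (\<Sum>i<n. q m i * p i k) - p i0 k * (\<Sum>i<n. q m i * p i l)"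
          unfolding z_def by (simp add: sum_distrib_left sum_subtractf algebra_simps)
        moreover have "\<And>m. (\<Sum>i<n. q m i * z i) = 0" using z0 by simp
        ultimately have "p i0 l * (\<Sum>i<n. q k i * p i k) - p i0 k * (\<Sum>i<n. q k i * p i l) = 0"
          "p i0 l * (\<Sum>i<n. q l i * p i k) - p i0 k * (\<Sum>i<n. q l i * p i l) = 0" using k l by metis+
        hence "p i0 l = 0" "p i0 k = 0" using E3 k l kl by auto
        thus False using False by simp
      qed
      then obtain i1 where i1: "i1 < n" "z i1 \<noteq> 0" by auto
      from ceig_to_real[OF ev i1] obtain x where "eigv n M (d k) x" "\<forall>i. z i = 0 \<longrightarrow> x i = 0" by auto
      moreover have "z i0 = 0" unfolding z_def by simp
      ultimately show ?thesis by auto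
    qed
  qed
  have C4: "\<forall>\<mu>. (\<forall>k<n. d k \<le> \<mu>) \<longrightarrow> (\<forall>x. quad n M x \<le> \<mu> * nrm n x)"
  proof (intro allI impI)
    fix \<mu> x assume mu: "\<forall>k<n. d k \<le> \<mu>"
    define g where "g = (\<lambda>i j. (if i = j then \<mu> else 0) - M i j)"
    have "(\<Sum>i<n. cnj (complex_of_real (x i)) * (\<Sum>j<n. complex_of_real (g i j) * complex_of_real (x j)))
      = of_real (\<Sum>i<n. (cmod (\<Sum>k<n. p i k * of_real (sqrt (\<mu> - d k)) * (\<Sum>j<n. q k j * complex_of_real (x j))))^2)"
    proof (rule psd_lemma)
      show "\<forall>i<n. \<forall>j<n. cnj (complex_of_real (g i j)) = complex_of_real (g j i)"
        using symm unfolding g_def by auto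
      show "\<forall>i<n. \<forall>k<n. (\<Sum>j<n. complex_of_real (g i j) * p j k) = p i k * complex_of_real (\<mu> - d k)"
      proof (intro allI impI)
        fix i k assume i: "i < n" and k: "k < n"
        have "(\<Sum>j<n. complex_of_real (g i j) * p j k)
          = (\<Sum>j<n. (if i = j then complex_of_real \<mu> * p j k else 0)) - (\<Sum>j<n. complex_of_real (M i j) * p j k)"
          unfolding g_def by (subst sum_subtractf[symmetric]) (intro sum.cong refl, auto simp: algebra_simps)
        also have "\<dots> = p i k * complex_of_real (\<mu> - d k)" using i E1'[OF i k] by (simp add: algebra_simps)
        finally show "(\<Sum>j<n. complex_of_real (g i j) * p j k) = p i k * complex_of_real (\<mu> - d k)" .
      qed
      show "\<forall>i<n. \<forall>j<n. (\<Sum>k<n. p i k * q k j) = (if i = j then 1 else 0)" using E2 by auto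
      show "\<forall>k<n. 0 \<le> \<mu> - d k" using mu by auto
    qed
    moreover have "(\<Sum>i<n. cnj (complex_of_real (x i)) * (\<Sum>j<n. complex_of_real (g i j) * complex_of_real (x j)))
      = of_real (\<Sum>i<n. x i * (\<Sum>j<n. g i j * x j))" by simp
    ultimately have "(\<Sum>i<n. x i * (\<Sum>j<n. g i j * x j)) \<ge> 0"
      by (metis (no_types, lifting) of_real_eq_iff sum_nonneg zero_le_power2)
    thus "quad n M x \<le> \<mu> * nrm n x" unfolding g_def quad_shift by simp
  qed
  have C5: "\<forall>\<mu>. (\<forall>k<n. \<mu> \<le> d k) \<longrightarrow> (\<forall>x. \<mu> * nrm n x \<le> quad n M x)"
  proof (intro allI impI)
    fix \<mu> x assume mu: "\<forall>k<n. \<mu> \<le> d k"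
    define g where "g = (\<lambda>i j. M i j - (if i = j then \<mu> else 0))"
    have "(\<Sum>i<n. cnj (complex_of_real (x i)) * (\<Sum>j<n. complex_of_real (g i j) * complex_of_real (x j)))
      = of_real (\<Sum>i<n. (cmod (\<Sum>k<n. p i k * of_real (sqrt (d k - \<mu>)) * (\<Sum>j<n. q k j * complex_of_real (x j))))^2)"
    proof (rule psd_lemma)
      show "\<forall>i<n. \<forall>j<n. cnj (complex_of_real (g i j)) = complex_of_real (g j i)"
        using symm unfolding g_def by auto
      show "\<forall>i<n. \<forall>k<n. (\<Sum>j<n. complex_of_real (g i j) * p j k) = p i k * complex_of_real (d k - \<mu>)"
      proof (intro allI impI)
        fix i k assume i: "i < n" and k: "k < n"
        have "(\<Sum>j<n. complex_of_real (g i j) * p j k)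
          = (\<Sum>j<n. complex_of_real (M i j) * p j k) - (\<Sum>j<n. (if i = j then complex_of_real \<mu> * p j k else 0))"
          unfolding g_def by (subst sum_subtractf[symmetric]) (intro sum.cong refl, auto simp: algebra_simps)
        also have "\<dots> = p i k * complex_of_real (d k - \<mu>)" using i E1'[OF i k] by (simp add: algebra_simps)
        finally show "(\<Sum>j<n. complex_of_real (g i j) * p j k) = p i k * complex_of_real (d k - \<mu>)" .
      qed
      show "\<forall>i<n. \<forall>j<n. (\<Sum>k<n. p i k * q k j) = (if i = j then 1 else 0)" using E2 by auto
      show "\<forall>k<n. 0 \<le> d k - \<mu>" using mu by auto
    qed
    moreover have "(\<Sum>i<n. cnj (complex_of_real (x i)) * (\<Sum>j<n. complex_of_real (g i j) * complex_of_real (x j)))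
      = of_real (\<Sum>i<n. x i * (\<Sum>j<n. g i j * x j))" by simp
    ultimately have "(\<Sum>i<n. x i * (\<Sum>j<n. g i j * x j)) \<ge> 0"
      by (metis (no_types, lifting) of_real_eq_iff sum_nonneg zero_le_power2)
    thus "\<mu> * nrm n x \<le> quad n M x" unfolding g_def quad_shift2 by simp
  qed
  show ?thesis using C1 C2 C3 C4 C5 by blast
qed


definition specd :: "nat \<Rightarrow> (nat \<Rightarrow> nat \<Rightarrow> real) \<Rightarrow> (nat \<Rightarrow> real) \<Rightarrow> bool" where
  "specd n M d \<longleftrightarrow> char_poly (cmat n M) = (\<Prod>k\<leftarrow>[0..<n]. [:- complex_of_real (d k), 1:])
     \<and> (\<forall>k<n. \<exists>x. eigv n M (d k) x)
     \<and> (\<forall>k l i0. k < n \<longrightarrow> l < n \<longrightarrow> k \<noteq> l \<longrightarrow> d k = d l \<longrightarrow> i0 < n \<longrightarrow> (\<exists>x. eigv n M (d k) x \<and> x i0 = 0))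
     \<and> (\<forall>\<mu>. (\<forall>k<n. d k \<le> \<mu>) \<longrightarrow> (\<forall>x. quad n M x \<le> \<mu> * nrm n x))
     \<and> (\<forall>\<mu>. (\<forall>k<n. \<mu> \<le> d k) \<longrightarrow> (\<forall>x. \<mu> * nrm n x \<le> quad n M x))"

definition symm :: "nat \<Rightarrow> (nat \<Rightarrow> nat \<Rightarrow> real) \<Rightarrow> bool" where
  "symm n M \<longleftrightarrow> (\<forall>i<n. \<forall>j<n. M i j = M j i)"

lemma specd_ex: "symm n M \<Longrightarrow> \<exists>d. specd n M d"
  using spec_real[of n M] unfolding specd_def symm_def by blast

lemma spectrum_cmat:
  assumes "specd n M d"
  shows "spectrum (cmat n M) = (\<lambda>k. complex_of_real (d k)) ` {..<n}"
proof -
  have A: "cmat n M \<in> carrier_mat n n" unfolding cmat_def by auto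
  have cp: "char_poly (cmat n M) = (\<Prod>k\<leftarrow>[0..<n]. [:- complex_of_real (d k), 1:])"
    using assms unfolding specd_def by auto
  have "spectrum (cmat n M) = {z. poly (char_poly (cmat n M)) z = 0}"
    by (rule spectrum_root_char_poly[OF A])
  also have "\<dots> = {z. \<exists>k<n. z = complex_of_real (d k)}"
    unfolding cp poly_prod_list by (auto simp: prod_list_zero_iff)
  finally show ?thesis by auto
qed

lemma spectral_radius_cmat:
  assumes "specd n M d" "n > 0"
  shows "spectral_radius (cmat n M) = Max ((\<lambda>k. \<bar>d k\<bar>) ` {..<n})"
proof -
  have "norm ` spectrum (cmat n M) = (\<lambda>k. \<bar>d k\<bar>) ` {..<n}"
    unfolding spectrum_cmat[OF assms(1)] by (auto simp: image_image)
  thus ?thesis unfolding spectral_radius_def by simp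
qed

lemma eigenvalues_desc_cmat:
  assumes "specd n M d"
  shows "eigenvalues_desc (cmat n M) = rev (sort (map d [0..<n]))"
proof -
  have cp: "char_poly (cmat n M) = (\<Prod>k\<leftarrow>[0..<n]. [:- complex_of_real (d k), 1:])"
    using assms unfolding specd_def by auto
  have "proots (char_poly (cmat n M)) = sum_list (map proots (map (\<lambda>k. [:- complex_of_real (d k), 1:]) [0..<n]))"
  proof -
    have "0 \<notin> set (map (\<lambda>k. [:- complex_of_real (d k), 1:]) [0..<n])" by auto
    from proots_prod_list[OF this] show ?thesis unfolding cp by simp
  qed
  also have "\<dots> = mset (map (\<lambda>k. complex_of_real (d k)) [0..<n])"
    by (induct n) (auto simp: proots_linear_factor)
  finally have "image_mset Re (proots (char_poly (cmat n M))) = mset (map d [0..<n])"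
    by (simp add: multiset.map_comp o_def)
  thus ?thesis unfolding eigenvalues_desc_def by (simp only: sorted_list_of_multiset_mset)
qed

lemma quad_add:
  assumes "symm n M"
  shows "quad n M (\<lambda>i. a i + t * b i) = quad n M a + 2 * t * (\<Sum>i<n. b i * (\<Sum>j<n. M i j * a j)) + t^2 * quad n M b"
proof -
  have S: "\<And>i j. i < n \<Longrightarrow> j < n \<Longrightarrow> M i j = M j i" using assms unfolding symm_def by auto
  have "quad n M (\<lambda>i. a i + t * b i) = (\<Sum>i<n. \<Sum>j<n. a i * M i j * a j + t * (a i * M i j * b j) + t * (b i * M i j * a j) + t^2 * (b i * M i j * b j))"
    unfolding quad_def by (intro sum.cong refl) (simp add: algebra_simps power2_eq_square)
  also have "\<dots> = quad n M a + t * (\<Sum>i<n. \<Sum>j<n. a i * M i j * b j) + t * (\<Sum>i<n. \<Sum>j<n. b i * M i j * a j) + t^2 * quad n M b"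
    unfolding quad_def by (simp add: sum.distrib sum_distrib_left)
  also have "(\<Sum>i<n. \<Sum>j<n. a i * M i j * b j) = (\<Sum>i<n. \<Sum>j<n. b i * M i j * a j)"
    by (subst sum.swap) (intro sum.cong refl, auto simp: S ac_simps)
  also have "(\<Sum>i<n. \<Sum>j<n. b i * M i j * a j) = (\<Sum>i<n. b i * (\<Sum>j<n. M i j * a j))"
    by (simp add: sum_distrib_left ac_simps)
  finally show ?thesis by simp
qed

lemma nrm_add: "nrm n (\<lambda>i. a i + t * b i) = nrm n a + 2 * t * (\<Sum>i<n. b i * a i) + t^2 * nrm n b"
  unfolding nrm_def by (simp add: sum.distrib sum_distrib_left power2_eq_square algebra_simps)

lemma rayleigh_eq:
  assumes S: "symm n M" and ub: "\<forall>x. quad n M x \<le> \<mu> * nrm n x" and eq: "quad n M z = \<mu> * nrm n z"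
  shows "\<forall>i<n. (\<Sum>j<n. M i j * z j) = \<mu> * z i"
proof -
  define v where "v = (\<lambda>i. (\<Sum>j<n. M i j * z j) - \<mu> * z i)"
  define R where "R = nrm n v"
  define s where "s = quad n M v - \<mu> * nrm n v"
  have key: "\<And>t. quad n M (\<lambda>i. z i + t * v i) - \<mu> * nrm n (\<lambda>i. z i + t * v i) = 2 * t * R + t^2 * s"
  proof -
    fix t
    have "(\<Sum>i<n. v i * (\<Sum>j<n. M i j * z j)) - \<mu> * (\<Sum>i<n. v i * z i) = R"
      unfolding R_def nrm_def v_def by (simp add: sum_distrib_left sum_subtractf[symmetric] power2_eq_square algebra_simps)
    thus "?thesis t" unfolding quad_add[OF S] nrm_add s_def using eq by (simp add: algebra_simps)
  qed
  have R0: "R \<ge> 0" unfolding R_def nrm_def by (simp add: sum_nonneg)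
  have "R = 0"
  proof (rule ccontr)
    assume "R \<noteq> 0"
    with R0 have Rp: "R > 0" by simp
    define t where "t = R / (\<bar>s\<bar> + 1)"
    have tp: "t > 0" unfolding t_def using Rp by auto
    have "2 * t * R + t^2 * s \<le> 0" using key[of t] ub by (smt (verit))
    hence "t * (2 * R + t * s) \<le> 0" by (simp add: algebra_simps power2_eq_square)
    hence "2 * R + t * s \<le> 0" using tp by (simp add: mult_le_0_iff)
    moreover have "t * \<bar>s\<bar> \<le> R"
    proof -
      have "t * \<bar>s\<bar> = R * (\<bar>s\<bar> / (\<bar>s\<bar> + 1))" unfolding t_def by simp
      also have "\<dots> \<le> R * 1" using Rp by (intro mult_left_mono) auto
      finally show ?thesis by simp
    qed
    moreover have "t * s \<ge> - (t * \<bar>s\<bar>)" using tp by (simp add: abs_if mult_le_0_iff)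
    ultimately show False using Rp by linarith
  qed
  hence "\<forall>i<n. (v i)^2 = 0" unfolding R_def nrm_def by (subst (asm) sum_nonneg_eq_0_iff) auto
  thus ?thesis unfolding v_def by auto
qed


lemma nrm_nonneg: "nrm n x \<ge> 0"
  unfolding nrm_def by (simp add: sum_nonneg)

lemma nrm_pos: "i < n \<Longrightarrow> x i \<noteq> 0 \<Longrightarrow> nrm n x > 0"
proof -
  assume i: "i < n" and x: "x i \<noteq> 0"
  have "(x i)^2 \<le> nrm n x" unfolding nrm_def using i by (intro member_le_sum) auto
  moreover have "(x i)^2 > 0" using x by simp
  ultimately show ?thesis by linarith
qed

lemma eig_quad: "eigv n M r x \<Longrightarrow> quad n M x = r * nrm n x"
proof -
  assume e: "eigv n M r x"
  have "quad n M x = (\<Sum>i<n. x i * (\<Sum>j<n. M i j * x j))"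
    unfolding quad_def by (simp add: sum_distrib_left ac_simps)
  also have "\<dots> = (\<Sum>i<n. x i * (r * x i))" using e unfolding eigv_def by (intro sum.cong refl) auto
  also have "\<dots> = r * nrm n x" unfolding nrm_def by (simp add: sum_distrib_left power2_eq_square ac_simps)
  finally show ?thesis .
qed

lemma specd_rho_ge: assumes "specd n M d" "k < n" shows "\<bar>d k\<bar> \<le> spectral_radius (cmat n M)"
proof -
  have n: "n > 0" using assms(2) by auto
  show ?thesis unfolding spectral_radius_cmat[OF assms(1) n] using assms(2) by (intro Max_ge) auto
qed

lemma specd_ub: assumes "specd n M d" "n > 0"
  shows "quad n M y \<le> spectral_radius (cmat n M) * nrm n y"
proof -
  have "\<forall>k<n. d k \<le> spectral_radius (cmat n M)" using specd_rho_ge[OF assms(1)] by force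
  thus ?thesis using assms(1) unfolding specd_def by blast
qed

lemma specd_lb: assumes "specd n M d" "n > 0"
  shows "- spectral_radius (cmat n M) * nrm n y \<le> quad n M y"
proof -
  have "\<forall>k<n. - spectral_radius (cmat n M) \<le> d k" using specd_rho_ge[OF assms(1)] by force
  thus ?thesis using assms(1) unfolding specd_def by blast
qed

lemma specd_rad_eig: assumes "specd n M d" "n > 0"
  shows "\<exists>x r. eigv n M r x \<and> \<bar>r\<bar> = spectral_radius (cmat n M)"
proof -
  have "spectral_radius (cmat n M) \<in> (\<lambda>k. \<bar>d k\<bar>) ` {..<n}"
    unfolding spectral_radius_cmat[OF assms] using assms(2) by (intro Max_in) auto
  then obtain k where k: "k < n" "spectral_radius (cmat n M) = \<bar>d k\<bar>" by auto
  from assms(1) k obtain x where "eigv n M (d k) x" unfolding specd_def by blast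
  thus ?thesis using k by auto
qed

lemma rho_lb: assumes "specd n M d" "n > 0" "c * nrm n x \<le> quad n M x" "nrm n x > 0"
  shows "c \<le> spectral_radius (cmat n M)"
proof -
  have "c * nrm n x \<le> spectral_radius (cmat n M) * nrm n x"
    using assms(3) specd_ub[OF assms(1,2), of x] by linarith
  thus ?thesis using assms(4) by simp
qed

lemma rho_lb_strict: assumes "specd n M d" "n > 0" "c * nrm n x < quad n M x" "nrm n x > 0"
  shows "c < spectral_radius (cmat n M)"
proof -
  have "c * nrm n x < spectral_radius (cmat n M) * nrm n x"
    using assms(3) specd_ub[OF assms(1,2), of x] by linarith
  thus ?thesis using assms(4) by simp
qed

lemma rho_lb_neg: assumes "specd n M d" "n > 0" "quad n M x \<le> - c * nrm n x" "nrm n x > 0"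
  shows "c \<le> spectral_radius (cmat n M)"
proof -
  have "- spectral_radius (cmat n M) * nrm n x \<le> - c * nrm n x"
    using assms(3) specd_lb[OF assms(1,2), of x] by linarith
  thus ?thesis using assms(4) by simp
qed

definition delM :: "(nat \<Rightarrow> nat \<Rightarrow> real) \<Rightarrow> nat \<Rightarrow> nat \<Rightarrow> nat \<Rightarrow> nat \<Rightarrow> real" where
  "delM M p q = (\<lambda>i j. if (i = p \<and> j = q) \<or> (i = q \<and> j = p) then 0 else M i j)"

lemma dsum_delta: "p < (n::nat) \<Longrightarrow> q < n \<Longrightarrow> (\<Sum>i<n. \<Sum>j<n. if i = p then (if j = q then c else 0) else 0) = (c::real)"
proof -
  assume p: "p < n" and q: "q < n"
  have "(\<Sum>i<n. \<Sum>j<n. if i = p then (if j = q then c else 0) else 0) = (\<Sum>i<n. if i = p then c else 0)"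
  proof (intro sum.cong refl)
    fix i
    show "(\<Sum>j<n. if i = p then (if j = q then c else 0) else 0) = (if i = p then c else 0)"
      using q by (cases "i = p") (simp_all add: sum.delta)
  qed
  also have "\<dots> = c" using p by simp
  finally show ?thesis .
qed

lemma quad_delM:
  assumes "p < n" "q < n" "p \<noteq> q"
  shows "quad n (delM M p q) y = quad n M y - y p * M p q * y q - y q * M q p * y p"
proof -
  have "quad n (delM M p q) y = (\<Sum>i<n. \<Sum>j<n. y i * M i j * y j
      - ((if i = p then (if j = q then y p * M p q * y q else 0) else 0)
       + (if i = q then (if j = p then y q * M q p * y p else 0) else 0)))"
    unfolding quad_def delM_def using assms by (intro sum.cong refl) auto
  also have "\<dots> = quad n M y - y p * M p q * y q - y q * M q p * y p"
    unfolding quad_def using assms by (simp only: sum_subtractf sum.distrib dsum_delta)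
  finally show ?thesis .
qed

lemma symm_delM: "symm n M \<Longrightarrow> symm n (delM M p q)"
  unfolding symm_def delM_def by auto


definition conn :: "nat \<Rightarrow> (nat \<Rightarrow> nat \<Rightarrow> real) \<Rightarrow> bool" where
  "conn n A \<longleftrightarrow> (\<forall>S. S \<subseteq> {..<n} \<longrightarrow> S \<noteq> {} \<longrightarrow> (\<forall>i\<in>S. \<forall>j<n. A i j \<noteq> 0 \<longrightarrow> j \<in> S) \<longrightarrow> {..<n} \<subseteq> S)"

lemma conn_exit:
  assumes "conn n A" "S \<subseteq> {..<n}" "i0 \<in> S" "i1 < n" "i1 \<notin> S"
  shows "\<exists>p\<in>S. \<exists>q<n. A p q \<noteq> 0 \<and> q \<notin> S"
  using assms unfolding conn_def by blast

lemma sum_single: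
  assumes "q < (n::nat)" "\<forall>j<n. j \<noteq> q \<longrightarrow> f j = 0"
  shows "(\<Sum>j<n. f j) = (f q :: real)"
proof -
  have "(\<Sum>j<n. f j) = (\<Sum>j<n. if j = q then f q else 0)" using assms by (intro sum.cong refl) auto
  also have "\<dots> = f q" using assms(1) by (simp add: sum.delta)
  finally show ?thesis .
qed

lemma sum_nonneg_zero:
  assumes "(\<Sum>j<(n::nat). f j) = (0::real)" "\<forall>j<n. f j \<ge> 0" "j < n"
  shows "f j = 0"
  using assms by (subst (asm) sum_nonneg_eq_0_iff) auto

lemma key_L:
  fixes B :: "nat \<Rightarrow> nat \<Rightarrow> real"
  assumes S: "symm n B" and ent: "\<forall>i<n. \<forall>j<n. B i j \<in> {-1,0,1}" and dg: "\<forall>i<n. B i i = 0"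
    and cn: "conn n (\<lambda>i j. \<bar>B i j\<bar>)"
    and ev: "eigv n B r x"
    and H: "\<forall>p<n. \<forall>q<n. B p q \<noteq> 0 \<longrightarrow> (\<forall>y. quad n (delM (\<lambda>i j. \<bar>B i j\<bar>) p q) y \<le> \<bar>r\<bar> * nrm n y)"
  shows "(\<forall>i<n. x i \<noteq> 0) \<and> (\<forall>i<n. \<forall>j<n. B i j \<noteq> 0 \<longrightarrow> (if r \<ge> 0 then 1 else -1) * B i j * x i * x j > 0)"
proof -
  define A where "A = (\<lambda>i j. \<bar>B i j\<bar>)"
  define s :: real where "s = (if r \<ge> 0 then 1 else -1)"
  define y where "y = (\<lambda>i. \<bar>x i\<bar>)"
  define \<theta> where "\<theta> = \<bar>r\<bar>"
  have sr: "s * r = \<theta>" unfolding s_def \<theta>_def by auto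
  have sa: "\<bar>s\<bar> = 1" unfolding s_def by auto
  have Bsym: "\<And>i j. i < n \<Longrightarrow> j < n \<Longrightarrow> B i j = B j i" using S unfolding symm_def by auto
  have Asym: "symm n A" using Bsym unfolding symm_def A_def by auto
  have qB: "quad n B x = r * nrm n x" by (rule eig_quad[OF ev])
  have ny: "nrm n y = nrm n x" unfolding nrm_def y_def by simp
  define T where "T = (\<lambda>i j. y i * A i j * y j - s * (x i * B i j * x j))"
  have Tnn: "\<And>i j. T i j \<ge> 0"
  proof -
    fix i j
    have "y i * A i j * y j = \<bar>s * (x i * B i j * x j)\<bar>" unfolding y_def A_def using sa
      by (simp add: abs_mult)
    thus "T i j \<ge> 0" unfolding T_def by linarith
  qed
  have D: "quad n A y - \<theta> * nrm n x = (\<Sum>i<n. \<Sum>j<n. T i j)"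
  proof -
    have "(\<Sum>i<n. \<Sum>j<n. T i j) = quad n A y - s * quad n B x"
      unfolding T_def quad_def by (simp add: sum_subtractf sum_distrib_left)
    thus ?thesis using qB sr by (simp add: mult.assoc[symmetric])
  qed
  have sat: "\<And>p q. p < n \<Longrightarrow> q < n \<Longrightarrow> B p q \<noteq> 0 \<Longrightarrow> s * (x p * B p q * x q) \<ge> 0"
  proof (rule ccontr)
    fix p q assume p: "p < n" and q: "q < n" and b: "B p q \<noteq> 0" and neg: "\<not> s * (x p * B p q * x q) \<ge> 0"
    define w where "w = s * (x p * B p q * x q)"
    have wn: "w < 0" using neg unfolding w_def by simp
    have pq: "p \<noteq> q" using dg b p by auto
    have yw: "y p * A p q * y q = - w"
    proof -
      have "y p * A p q * y q = \<bar>w\<bar>" unfolding y_def A_def w_def using sa by (simp add: abs_mult)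
      thus ?thesis using wn by simp
    qed
    have yw2: "y q * A q p * y p = - w" using yw Bsym[OF p q] unfolding A_def by (simp add: ac_simps)
    have Tpq: "T p q = -2 * w" unfolding T_def using yw w_def by simp
    have Tqp: "T q p = -2 * w"
    proof -
      have "s * (x q * B q p * x p) = w" unfolding w_def using Bsym[OF p q] by (simp add: ac_simps)
      thus ?thesis unfolding T_def using yw2 by simp
    qed
    have "(\<Sum>i<n. \<Sum>j<n. T i j) \<ge> (\<Sum>i<n. (if i = p then T p q else if i = q then T q p else 0))"
    proof (rule sum_mono)
      fix i assume i: "i \<in> {..<n}"
      show "(if i = p then T p q else if i = q then T q p else 0) \<le> (\<Sum>j<n. T i j)"
        using p q i Tnn by (auto intro!: member_le_sum sum_nonneg)
    qed
    also have "(\<Sum>i<n. (if i = p then T p q else if i = q then T q p else 0)) = T p q + T q p"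
    proof -
      have "(\<Sum>i<n. (if i = p then T p q else if i = q then T q p else 0))
        = (\<Sum>i<n. (if i = p then T p q else 0) + (if i = q then T q p else 0))"
        using pq by (intro sum.cong refl) auto
      also have "\<dots> = T p q + T q p" using p q by (simp add: sum.distrib sum.delta)
      finally show ?thesis .
    qed
    finally have Tge: "(\<Sum>i<n. \<Sum>j<n. T i j) \<ge> -4 * w" using Tpq Tqp by simp
    have "quad n (delM A p q) y = quad n A y - y p * A p q * y q - y q * A q p * y p"
      by (rule quad_delM[OF p q pq])
    also have "\<dots> = \<theta> * nrm n x + (\<Sum>i<n. \<Sum>j<n. T i j) + 2 * w" using D yw yw2 by simp
    finally have "quad n (delM A p q) y \<ge> \<theta> * nrm n y - 2 * w" using Tge ny by simp
    moreover have "quad n (delM A p q) y \<le> \<theta> * nrm n y" using H p q b unfolding A_def \<theta>_def by blast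
    ultimately show False using wn by simp
  qed
  have T0: "\<And>i j. i < n \<Longrightarrow> j < n \<Longrightarrow> T i j = 0"
  proof -
    fix i j assume i: "i < n" and j: "j < n"
    show "T i j = 0"
    proof (cases "B i j = 0")
      case True thus ?thesis unfolding T_def A_def by simp
    next
      case False
      have "y i * A i j * y j = \<bar>s * (x i * B i j * x j)\<bar>" unfolding y_def A_def using sa
        by (simp add: abs_mult)
      thus ?thesis unfolding T_def using sat[OF i j False] by simp
    qed
  qed
  have qAy: "quad n A y = \<theta> * nrm n y" using D T0 ny by simp
  have nz: "\<forall>i<n. x i \<noteq> 0"
  proof (rule ccontr)
    assume "\<not> (\<forall>i<n. x i \<noteq> 0)"
    then obtain i0 where i0: "i0 < n" "x i0 = 0" by auto
    from ev obtain i1 where i1: "i1 < n" "x i1 \<noteq> 0" unfolding eigv_def by auto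
    define Z where "Z = {i. i < n \<and> x i = 0}"
    have "\<exists>p\<in>Z. \<exists>q<n. A p q \<noteq> 0 \<and> q \<notin> Z"
      by (rule conn_exit[OF cn[folded A_def], of Z i0 i1]) (use i0 i1 in \<open>auto simp: Z_def\<close>)
    then obtain p q where p: "p < n" "x p = 0" and q: "q < n" "A p q \<noteq> 0" "x q \<noteq> 0"
      unfolding Z_def by auto
    have b: "B p q \<noteq> 0" using q unfolding A_def by simp
    have pq: "p \<noteq> q" using p q by auto
    have yp: "y p = 0" using p unfolding y_def by simp
    have "quad n (delM A p q) y = \<theta> * nrm n y"
      using quad_delM[OF p(1) q(1) pq, of A y] qAy yp by simp
    moreover have ub: "\<forall>z. quad n (delM A p q) z \<le> \<theta> * nrm n z" using H p q b unfolding A_def \<theta>_def by blast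
    ultimately have "\<forall>i<n. (\<Sum>j<n. delM A p q i j * y j) = \<theta> * y i"
      using rayleigh_eq[OF symm_delM[OF Asym] ub] by blast
    hence "(\<Sum>j<n. delM A p q p j * y j) = 0" using p yp by simp
    hence zero: "\<And>j. j < n \<Longrightarrow> delM A p q p j * y j = 0"
      by (rule sum_nonneg_zero) (auto simp: delM_def A_def y_def)
    have "\<forall>j<n. j \<noteq> q \<longrightarrow> B p j * x j = 0"
    proof (intro allI impI)
      fix j assume j: "j < n" "j \<noteq> q"
      have "delM A p q p j * y j = \<bar>B p j * x j\<bar>" using j pq unfolding delM_def A_def y_def by (simp add: abs_mult)
      thus "B p j * x j = 0" using zero[OF j(1)] by simp
    qed
    hence "(\<Sum>j<n. B p j * x j) = B p q * x q" by (rule sum_single[OF q(1)])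
    moreover have "(\<Sum>j<n. B p j * x j) = r * x p" using ev p unfolding eigv_def by auto
    ultimately have "B p q * x q = 0" using p by simp
    thus False using b q by simp
  qed
  have "\<forall>i<n. \<forall>j<n. B i j \<noteq> 0 \<longrightarrow> s * B i j * x i * x j > 0"
  proof (intro allI impI)
    fix i j assume i: "i < n" and j: "j < n" and b: "B i j \<noteq> 0"
    have "s * (x i * B i j * x j) \<ge> 0" by (rule sat[OF i j b])
    moreover have "s * (x i * B i j * x j) \<noteq> 0" using nz i j b sa by auto
    ultimately have "s * (x i * B i j * x j) > 0" by linarith
    thus "s * B i j * x i * x j > 0" by (simp add: ac_simps)
  qed
  thus ?thesis using nz unfolding s_def by auto
qed


definition skip :: "nat \<Rightarrow> nat \<Rightarrow> nat" where "skip v i = (if i < v then i else Suc i)"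
definition minor :: "(nat \<Rightarrow> nat \<Rightarrow> real) \<Rightarrow> nat \<Rightarrow> nat \<Rightarrow> nat \<Rightarrow> real" where
  "minor M v = (\<lambda>i j. M (skip v i) (skip v j))"
definition ext :: "nat \<Rightarrow> (nat \<Rightarrow> real) \<Rightarrow> nat \<Rightarrow> real" where
  "ext v y = (\<lambda>i. if i < v then y i else if i = v then 0 else y (i - 1))"

lemma ext_skip[simp]: "ext v y (skip v i) = y i"
  unfolding ext_def skip_def by auto

lemma ext_v[simp]: "ext v y v = 0"
  unfolding ext_def by auto

lemma bij_skip: assumes "v < n" shows "bij_betw (skip v) {..<n-1} ({..<n} - {v})"
proof (rule bij_betwI[where g = "\<lambda>j. if j < v then j else j - 1"])
  show "skip v \<in> {..<n - 1} \<rightarrow> {..<n} - {v}" using assms unfolding skip_def by (auto split: if_splits)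
  show "(\<lambda>j. if j < v then j else j - 1) \<in> {..<n} - {v} \<rightarrow> {..<n - 1}" using assms by (auto split: if_splits)
  show "\<And>x. x \<in> {..<n - 1} \<Longrightarrow> (if skip v x < v then skip v x else skip v x - 1) = x"
    unfolding skip_def by auto
  show "\<And>y. y \<in> {..<n} - {v} \<Longrightarrow> skip v (if y < v then y else y - 1) = y"
    unfolding skip_def by auto
qed

lemma sum_skip: assumes "v < n" shows "(\<Sum>i<n-1. f (skip v i)) = (\<Sum>i<n. f i) - (f v :: real)"
proof -
  have "(\<Sum>i<n-1. f (skip v i)) = (\<Sum>i\<in>{..<n} - {v}. f i)"
    using sum.reindex_bij_betw[OF bij_skip[OF assms], of f] by simp
  also have "\<dots> = (\<Sum>i<n. f i) - f v" using assms by (simp add: sum_diff1)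
  finally show ?thesis .
qed

lemma quad_minor:
  assumes "v < n" "z v = 0"
  shows "quad (n-1) (minor M v) (\<lambda>i. z (skip v i)) = quad n M z"
proof -
  have "quad (n-1) (minor M v) (\<lambda>i. z (skip v i)) = (\<Sum>i<n-1. \<Sum>j<n. z (skip v i) * M (skip v i) j * z j)"
    unfolding quad_def minor_def
  proof (rule sum.cong[OF refl])
    fix i
    show "(\<Sum>j<n-1. z (skip v i) * M (skip v i) (skip v j) * z (skip v j)) = (\<Sum>j<n. z (skip v i) * M (skip v i) j * z j)"
      using sum_skip[OF assms(1), of "\<lambda>j. z (skip v i) * M (skip v i) j * z j"] assms(2) by simp
  qed
  also have "\<dots> = quad n M z"
    unfolding quad_def using sum_skip[OF assms(1), of "\<lambda>i. \<Sum>j<n. z i * M i j * z j"] assms(2) by simp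
  finally show ?thesis .
qed

lemma nrm_minor:
  assumes "v < n" "z v = 0"
  shows "nrm (n-1) (\<lambda>i. z (skip v i)) = nrm n z"
  unfolding nrm_def using sum_skip[OF assms(1), of "\<lambda>i. (z i)^2"] assms(2) by simp

lemma symm_minor: "symm n M \<Longrightarrow> v < n \<Longrightarrow> symm (n-1) (minor M v)"
  unfolding symm_def minor_def skip_def by auto

lemma quad_scale: "quad n M (\<lambda>i. c * x i) = c^2 * quad n M x"
  unfolding quad_def by (simp add: sum_distrib_left power2_eq_square ac_simps)

lemma nrm_scale: "nrm n (\<lambda>i. c * x i) = c^2 * nrm n x"
  unfolding nrm_def by (simp add: sum_distrib_left power_mult_distrib)

lemma quad_abs:
  assumes "\<forall>i<n. \<forall>j<n. A i j \<ge> 0"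
  shows "\<bar>quad n A x\<bar> \<le> quad n A (\<lambda>i. \<bar>x i\<bar>)"
proof -
  have "\<bar>quad n A x\<bar> \<le> (\<Sum>i<n. \<bar>\<Sum>j<n. x i * A i j * x j\<bar>)" unfolding quad_def by (rule sum_abs)
  also have "\<dots> \<le> (\<Sum>i<n. \<Sum>j<n. \<bar>x i * A i j * x j\<bar>)" by (intro sum_mono sum_abs)
  also have "\<dots> = quad n A (\<lambda>i. \<bar>x i\<bar>)" unfolding quad_def using assms
    by (intro sum.cong refl) (auto simp: abs_mult)
  finally show ?thesis .
qed

lemma perron_nozero:
  assumes S: "symm n A" and nn: "\<forall>i<n. \<forall>j<n. A i j \<ge> 0" and cn: "conn n A"
    and ub: "\<forall>y. quad n A y \<le> lam * nrm n y" and ev: "eigv n A lam x"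
  shows "\<forall>i<n. x i \<noteq> 0"
proof (rule ccontr)
  assume "\<not> (\<forall>i<n. x i \<noteq> 0)"
  then obtain i0 where i0: "i0 < n" "x i0 = 0" by auto
  from ev obtain i1 where i1: "i1 < n" "x i1 \<noteq> 0" unfolding eigv_def by auto
  define y where "y = (\<lambda>i. \<bar>x i\<bar>)"
  have "quad n A x = lam * nrm n x" by (rule eig_quad[OF ev])
  moreover have "quad n A x \<le> quad n A y" using quad_abs[OF nn, of x] unfolding y_def by linarith
  moreover have "nrm n y = nrm n x" unfolding y_def nrm_def by simp
  ultimately have "quad n A y = lam * nrm n y" using ub[rule_format, of y] by (smt (verit))
  from rayleigh_eq[OF S ub this] have Ay: "\<forall>i<n. (\<Sum>j<n. A i j * y j) = lam * y i" .
  define Z where "Z = {i. i < n \<and> x i = 0}"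
  have "\<exists>p\<in>Z. \<exists>q<n. A p q \<noteq> 0 \<and> q \<notin> Z"
    by (rule conn_exit[OF cn, of Z i0 i1]) (use i0 i1 in \<open>auto simp: Z_def\<close>)
  then obtain p q where p: "p < n" "x p = 0" and q: "q < n" "A p q \<noteq> 0" "x q \<noteq> 0"
    unfolding Z_def by auto
  have "(\<Sum>j<n. A p j * y j) = 0" using Ay p unfolding y_def by simp
  hence "A p q * y q = 0" by (rule sum_nonneg_zero) (use nn p q in \<open>auto simp: y_def\<close>)
  thus False using q unfolding y_def by simp
qed

lemma perron_vec:
  assumes S: "symm n A" and nn: "\<forall>i<n. \<forall>j<n. A i j \<ge> 0" and sp: "specd n A d" and n: "n > 0"
  shows "\<exists>y. eigv n A (spectral_radius (cmat n A)) y \<and> (\<forall>i. y i \<ge> 0)"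
proof -
  define \<rho> where "\<rho> = spectral_radius (cmat n A)"
  from specd_rad_eig[OF sp n] obtain x r where ev: "eigv n A r x" and r: "\<bar>r\<bar> = \<rho>" unfolding \<rho>_def by auto
  define y where "y = (\<lambda>i. \<bar>x i\<bar>)"
  have ub: "\<forall>z. quad n A z \<le> \<rho> * nrm n z" using specd_ub[OF sp n] unfolding \<rho>_def by auto
  have "quad n A x = r * nrm n x" by (rule eig_quad[OF ev])
  hence "\<rho> * nrm n x \<le> quad n A y" using quad_abs[OF nn, of x] r nrm_nonneg[of n x] unfolding y_def
    by (simp add: abs_mult)
  moreover have "nrm n y = nrm n x" unfolding y_def nrm_def by simp
  ultimately have "quad n A y = \<rho> * nrm n y" using ub[rule_format, of y] by (smt (verit))
  from rayleigh_eq[OF S ub this] have "\<forall>i<n. (\<Sum>j<n. A i j * y j) = \<rho> * y i" .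
  moreover from ev obtain i1 where "i1 < n" "x i1 \<noteq> 0" unfolding eigv_def by auto
  ultimately have "eigv n A \<rho> y" unfolding eigv_def y_def by auto
  thus ?thesis unfolding \<rho>_def y_def by auto
qed


lemma quad_cong: "(\<forall>i<n. \<forall>j<n. M i j = M' i j) \<Longrightarrow> quad n M y = quad n M' y"
  unfolding quad_def by (intro sum.cong refl) auto

lemma conn_cong: "(\<forall>i<n. \<forall>j<n. M i j = M' i j) \<Longrightarrow> conn n M \<Longrightarrow> conn n M'"
  unfolding conn_def by (metis lessThan_iff subsetD)

lemma abs_a1:
  assumes S: "symm n A" and nn: "\<forall>i<n. \<forall>j<n. A i j \<ge> 0" and cn: "conn n A" and n2: "n \<ge> 2"
    and sp: "specd n A d" and k: "k1 < n" "k2 < n" "k1 \<noteq> k2"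
    and mx: "\<forall>k<n. d k \<le> d k1"
  shows "\<exists>v<n. d k2 < spectral_radius (cmat (n-1) (minor A v))"
proof -
  define l1 where "l1 = d k1"
  define l2 where "l2 = d k2"
  have ub: "\<forall>y. quad n A y \<le> l1 * nrm n y" using sp mx unfolding specd_def l1_def by blast
  have lt: "l2 < l1"
  proof (rule ccontr)
    assume "\<not> l2 < l1"
    hence eq: "d k1 = d k2" using mx k unfolding l1_def l2_def by force
    from sp k eq obtain x where x: "eigv n A (d k1) x" "x 0 = 0"
      unfolding specd_def using n2 by (metis not_numeral_le_zero gr0I)
    from perron_nozero[OF S nn cn ub x(1)[folded l1_def]] x(2) n2 show False by auto
  qed
  from sp k obtain x1 where x1: "eigv n A l1 x1" unfolding specd_def l1_def by blast
  from sp k obtain y2 where y2: "eigv n A l2 y2" unfolding specd_def l2_def by blast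
  have Asym: "\<And>i j. i < n \<Longrightarrow> j < n \<Longrightarrow> A i j = A j i" using S unfolding symm_def by auto
  have orth: "(\<Sum>i<n. y2 i * x1 i) = 0"
  proof -
    have "(\<Sum>i<n. y2 i * (\<Sum>j<n. A i j * x1 j)) = l1 * (\<Sum>i<n. y2 i * x1 i)"
      using x1 unfolding eigv_def by (simp add: sum_distrib_left ac_simps)
    moreover have "(\<Sum>i<n. y2 i * (\<Sum>j<n. A i j * x1 j)) = (\<Sum>j<n. (\<Sum>i<n. A j i * y2 i) * x1 j)"
      by (simp add: sum_distrib_left sum_distrib_right ac_simps Asym) (subst sum.swap, simp add: Asym ac_simps)
    moreover have "(\<Sum>j<n. (\<Sum>i<n. A j i * y2 i) * x1 j) = l2 * (\<Sum>i<n. y2 i * x1 i)"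
      using y2 unfolding eigv_def by (simp add: sum_distrib_left ac_simps)
    ultimately have "(l1 - l2) * (\<Sum>i<n. y2 i * x1 i) = 0" by (simp add: algebra_simps)
    thus ?thesis using lt by simp
  qed
  from y2 obtain v where v: "v < n" "y2 v \<noteq> 0" unfolding eigv_def by auto
  define a where "a = (\<lambda>i. y2 v * x1 i)"
  define t where "t = - x1 v"
  define z where "z = (\<lambda>i. a i + t * y2 i)"
  have zv: "z v = 0" unfolding z_def a_def t_def by simp
  have Aa: "\<And>i. i < n \<Longrightarrow> (\<Sum>j<n. A i j * a j) = y2 v * l1 * x1 i"
  proof -
    fix i assume i: "i < n"
    have "(\<Sum>j<n. A i j * a j) = y2 v * (\<Sum>j<n. A i j * x1 j)" unfolding a_def
      by (simp add: sum_distrib_left ac_simps)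
    thus "?thesis i" using x1 i unfolding eigv_def by simp
  qed
  have cross: "(\<Sum>i<n. y2 i * (\<Sum>j<n. A i j * a j)) = 0"
  proof -
    have "(\<Sum>i<n. y2 i * (\<Sum>j<n. A i j * a j)) = (\<Sum>i<n. (y2 v * l1) * (y2 i * x1 i))"
      using Aa by (intro sum.cong refl) auto
    also have "\<dots> = 0" using orth by (simp add: sum_distrib_left[symmetric])
    finally show ?thesis .
  qed
  have qz: "quad n A z = (y2 v)^2 * l1 * nrm n x1 + t^2 * (l2 * nrm n y2)"
    unfolding z_def quad_add[OF S] cross unfolding a_def quad_scale eig_quad[OF x1] eig_quad[OF y2] by simp
  have "(\<Sum>i<n. y2 i * a i) = y2 v * (\<Sum>i<n. y2 i * x1 i)" unfolding a_def
    by (simp add: sum_distrib_left ac_simps)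
  hence cross2: "(\<Sum>i<n. y2 i * a i) = 0" using orth by simp
  have nz: "nrm n z = (y2 v)^2 * nrm n x1 + t^2 * nrm n y2"
    unfolding z_def nrm_add cross2 unfolding a_def nrm_scale by simp
  from x1 obtain i1 where "i1 < n" "x1 i1 \<noteq> 0" unfolding eigv_def by auto
  hence nx1: "nrm n x1 > 0" by (rule nrm_pos)
  have "l2 * nrm n z < quad n A z"
  proof -
    have "quad n A z - l2 * nrm n z = (y2 v)^2 * (l1 - l2) * nrm n x1"
      unfolding qz nz by (simp add: algebra_simps)
    moreover have "(y2 v)^2 * (l1 - l2) * nrm n x1 > 0" using v lt nx1 by simp
    ultimately show ?thesis by linarith
  qed
  moreover have "nrm n z > 0"
  proof -
    have "(y2 v)^2 * nrm n x1 > 0" using v nx1 by simp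
    moreover have "t^2 * nrm n y2 \<ge> 0" using nrm_nonneg[of n y2] by simp
    ultimately show ?thesis unfolding nz by linarith
  qed
  moreover obtain d' where sp': "specd (n-1) (minor A v) d'" using specd_ex[OF symm_minor[OF S v(1)]] by auto
  ultimately have "l2 < spectral_radius (cmat (n-1) (minor A v))"
    using rho_lb_strict[OF sp', of l2 "\<lambda>i. z (skip v i)"] quad_minor[where v=v and n=n and z=z and M=A, OF v(1) zv] nrm_minor[where v=v and n=n and z=z, OF v(1) zv] n2
    by simp
  thus ?thesis using v unfolding l2_def by auto
qed

lemma abs_a2:
  assumes S: "symm n A" and nn: "\<forall>i<n. \<forall>j<n. A i j \<ge> 0" and n2: "n \<ge> 2"
    and v: "v < n" and q: "q < n" "v \<noteq> q"
  shows "spectral_radius (cmat (n-1) (minor A v)) \<le> spectral_radius (cmat n (delM A v q))"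
proof -
  obtain d' where sp': "specd (n-1) (minor A v) d'" using specd_ex[OF symm_minor[OF S v]] by auto
  obtain d'' where sp'': "specd n (delM A v q) d''" using specd_ex[OF symm_delM[OF S]] by auto
  have n1: "n - 1 > 0" using n2 by simp
  from specd_rad_eig[OF sp' n1] obtain x r where ev: "eigv (n-1) (minor A v) r x"
    and r: "\<bar>r\<bar> = spectral_radius (cmat (n-1) (minor A v))" by auto
  define y where "y = (\<lambda>i. \<bar>x i\<bar>)"
  have nnm: "\<forall>i<n-1. \<forall>j<n-1. minor A v i j \<ge> 0" using nn v unfolding minor_def skip_def by auto
  have "quad (n-1) (minor A v) x = r * nrm (n-1) x" by (rule eig_quad[OF ev])
  hence ge: "\<bar>r\<bar> * nrm (n-1) y \<le> quad (n-1) (minor A v) y"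
    using quad_abs[OF nnm, of x] nrm_nonneg[of "n-1" x] unfolding y_def nrm_def
    by (simp add: abs_mult)
  define z where "z = ext v y"
  have zv: "z v = 0" unfolding z_def by simp
  have zs: "(\<lambda>i. z (skip v i)) = y" unfolding z_def by simp
  have "quad n (delM A v q) z = quad n A z" using quad_delM[OF v q] zv by simp
  also have "\<dots> = quad (n-1) (minor A v) y" using quad_minor[where v=v and n=n and z=z and M=A, OF v zv] zs by simp
  finally have qz: "quad n (delM A v q) z = quad (n-1) (minor A v) y" .
  have nz: "nrm n z = nrm (n-1) y" using nrm_minor[where v=v and n=n and z=z, OF v zv] zs by simp
  from ev obtain i1 where "i1 < n - 1" "x i1 \<noteq> 0" unfolding eigv_def by auto
  hence "nrm (n-1) y > 0" unfolding y_def by (intro nrm_pos) auto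
  hence "\<bar>r\<bar> \<le> spectral_radius (cmat n (delM A v q))"
    using rho_lb[OF sp'', of "\<bar>r\<bar>" z] ge qz nz n2 by simp
  thus ?thesis using r by simp
qed

lemma sum_two:
  assumes "p < (n::nat)" "q < n" "p \<noteq> q" "\<forall>j<n. j \<noteq> p \<and> j \<noteq> q \<longrightarrow> f j = 0"
  shows "(\<Sum>j<n. f j) = f p + (f q :: real)"
proof -
  have "(\<Sum>j<n. f j) = (\<Sum>j<n. (if j = p then f p else 0) + (if j = q then f q else 0))"
    using assms by (intro sum.cong refl) auto
  also have "\<dots> = f p + f q" using assms by (simp add: sum.distrib sum.delta)
  finally show ?thesis .
qed

lemma abs_b:
  assumes ent: "\<forall>i<n. \<forall>j<n. A i j \<in> {0,1}" and S: "symm n A" and dg: "\<forall>i<n. A i i = 0"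
    and cn: "conn n A" and n2: "n \<ge> 2" and sp: "specd n A d" and k0: "k0 < n" "\<forall>k<n. d k0 \<le> d k"
    and hyp: "\<forall>p<n. \<forall>q<n. A p q \<noteq> 0 \<longrightarrow> spectral_radius (cmat n (delM A p q)) \<le> - d k0"
  shows "\<exists>x::nat\<Rightarrow>real. \<forall>i<n. \<forall>j<n. A i j \<noteq> 0 \<longrightarrow> x i * x j < 0"
proof -
  have "\<exists>p\<in>{0}. \<exists>q<n. A p q \<noteq> 0 \<and> q \<notin> {0}"
    by (rule conn_exit[OF cn, of "{0}" 0 1]) (use n2 in auto)
  then obtain q where q: "q < n" "q \<noteq> 0" "A 0 q \<noteq> 0" by auto
  have n0: "0 < n" using n2 by auto
  have A0q: "A 0 q = 1" "A q 0 = 1" using q ent S n0 unfolding symm_def by force+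
  have A00: "A 0 0 = 0" "A q q = 0" using dg q n0 by auto
  define w :: "nat \<Rightarrow> real" where "w = (\<lambda>i. if i = 0 then 1 else if i = q then -1 else 0)"
  have row: "\<And>i. (\<Sum>j<n. w i * A i j * w j) = w i * (A i 0 - A i q)"
  proof -
    fix i
    have "(\<Sum>j<n. w i * A i j * w j) = w i * A i 0 * w 0 + w i * A i q * w q"
      by (rule sum_two[OF n0 q(1) q(2)[symmetric]]) (auto simp: w_def)
    thus "?thesis i" using q by (simp add: w_def algebra_simps)
  qed
  have qw: "quad n A w = -2"
  proof -
    have "quad n A w = (\<Sum>i<n. w i * (A i 0 - A i q))" unfolding quad_def using row by simp
    also have "\<dots> = w 0 * (A 0 0 - A 0 q) + w q * (A q 0 - A q q)"
      by (rule sum_two[OF n0 q(1) q(2)[symmetric]]) (auto simp: w_def)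
    also have "\<dots> = -2" using A0q A00 q by (simp add: w_def)
    finally show ?thesis .
  qed
  have nw: "nrm n w = 2"
  proof -
    have "nrm n w = (w 0)^2 + (w q)^2" unfolding nrm_def
      by (rule sum_two[OF n0 q(1) q(2)[symmetric]]) (auto simp: w_def)
    thus ?thesis using q by (simp add: w_def)
  qed
  have "d k0 * nrm n w \<le> quad n A w" using sp k0 unfolding specd_def by blast
  hence neg: "d k0 < 0" using qw nw by simp
  from sp k0 obtain x where ev: "eigv n A (d k0) x" unfolding specd_def by blast
  have absA: "\<forall>i<n. \<forall>j<n. \<bar>A i j\<bar> = A i j" using ent by force
  have ent': "\<forall>i<n. \<forall>j<n. A i j \<in> {-1,0,1}" using ent by force
  have cn': "conn n (\<lambda>i j. \<bar>A i j\<bar>)" by (rule conn_cong[OF _ cn]) (use absA in auto)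
  have H: "\<forall>p<n. \<forall>q<n. A p q \<noteq> 0 \<longrightarrow> (\<forall>y. quad n (delM (\<lambda>i j. \<bar>A i j\<bar>) p q) y \<le> \<bar>d k0\<bar> * nrm n y)"
  proof (intro allI impI)
    fix p q y assume p: "p < n" and q: "q < n" and b: "A p q \<noteq> 0"
    obtain d' where sp': "specd n (delM A p q) d'" using specd_ex[OF symm_delM[OF S]] by auto
    have "quad n (delM (\<lambda>i j. \<bar>A i j\<bar>) p q) y = quad n (delM A p q) y"
      by (rule quad_cong) (use absA in \<open>auto simp: delM_def\<close>)
    also have "\<dots> \<le> spectral_radius (cmat n (delM A p q)) * nrm n y" by (rule specd_ub[OF sp' n0])
    also have "\<dots> \<le> \<bar>d k0\<bar> * nrm n y" using hyp p q b neg nrm_nonneg[of n y]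
      by (intro mult_right_mono) auto
    finally show "quad n (delM (\<lambda>i j. \<bar>A i j\<bar>) p q) y \<le> \<bar>d k0\<bar> * nrm n y" .
  qed
  from key_L[OF S ent' dg cn' ev H] neg
  have "\<forall>i<n. \<forall>j<n. A i j \<noteq> 0 \<longrightarrow> - A i j * x i * x j > 0" by auto
  hence "\<forall>i<n. \<forall>j<n. A i j \<noteq> 0 \<longrightarrow> x i * x j < 0" using ent by fastforce
  thus ?thesis by (rule exI[where x=x])
qed

lemma abs_c:
  assumes ent: "\<forall>i<n. \<forall>j<n. B i j \<in> {-1,0,1}" and S: "symm n B" and dg: "\<forall>i<n. B i i = 0"
    and cn: "conn n (\<lambda>i j. \<bar>B i j\<bar>)" and n0: "n > 0"
    and lt: "spectral_radius (cmat n B) < spectral_radius (cmat n (\<lambda>i j. \<bar>B i j\<bar>))"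
  shows "\<exists>p<n. \<exists>q<n. B p q \<noteq> 0 \<and> spectral_radius (cmat n B) < spectral_radius (cmat n (delM (\<lambda>i j. \<bar>B i j\<bar>) p q))"
proof (rule ccontr)
  assume "\<not> ?thesis"
  hence hyp: "\<forall>p<n. \<forall>q<n. B p q \<noteq> 0 \<longrightarrow> spectral_radius (cmat n (delM (\<lambda>i j. \<bar>B i j\<bar>) p q)) \<le> spectral_radius (cmat n B)"
    by (meson not_less)
  define A where "A = (\<lambda>i j. \<bar>B i j\<bar>)"
  have SA: "symm n A" using S unfolding symm_def A_def by auto
  have nnA: "\<forall>i<n. \<forall>j<n. A i j \<ge> 0" unfolding A_def by auto
  obtain dB where spB: "specd n B dB" using specd_ex[OF S] by auto
  obtain dA where spA: "specd n A dA" using specd_ex[OF SA] by auto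
  from specd_rad_eig[OF spB n0] obtain x r where ev: "eigv n B r x" and r: "\<bar>r\<bar> = spectral_radius (cmat n B)" by auto
  have H: "\<forall>p<n. \<forall>q<n. B p q \<noteq> 0 \<longrightarrow> (\<forall>y. quad n (delM (\<lambda>i j. \<bar>B i j\<bar>) p q) y \<le> \<bar>r\<bar> * nrm n y)"
  proof (intro allI impI)
    fix p q y assume p: "p < n" and q: "q < n" and b: "B p q \<noteq> 0"
    obtain d' where sp': "specd n (delM A p q) d'" using specd_ex[OF symm_delM[OF SA]] by auto
    have "quad n (delM A p q) y \<le> spectral_radius (cmat n (delM A p q)) * nrm n y" by (rule specd_ub[OF sp' n0])
    also have "\<dots> \<le> \<bar>r\<bar> * nrm n y" using hyp p q b r nrm_nonneg[of n y] unfolding A_def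
      by (intro mult_right_mono) auto
    finally show "quad n (delM (\<lambda>i j. \<bar>B i j\<bar>) p q) y \<le> \<bar>r\<bar> * nrm n y" unfolding A_def .
  qed
  define s :: real where "s = (if r \<ge> 0 then 1 else -1)"
  from key_L[OF S ent dg cn ev H] have nz: "\<forall>i<n. x i \<noteq> 0"
    and sat: "\<forall>i<n. \<forall>j<n. B i j \<noteq> 0 \<longrightarrow> s * B i j * x i * x j > 0" unfolding s_def by auto
  from perron_vec[OF SA nnA spA n0] obtain u where
    eu: "eigv n A (spectral_radius (cmat n A)) u" by auto
  define w where "w = (\<lambda>i. sgn (x i) * u i)"
  have sg: "\<And>i j. i < n \<Longrightarrow> j < n \<Longrightarrow> sgn (x i) * B i j * sgn (x j) = s * A i j"
  proof -
    fix i j assume i: "i < n" and j: "j < n"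
    show "sgn (x i) * B i j * sgn (x j) = s * A i j"
    proof (cases "B i j = 0")
      case True thus ?thesis unfolding A_def by simp
    next
      case False
      have pos: "s * B i j * x i * x j > 0" using sat i j False by auto
      have Bv: "B i j = 1 \<or> B i j = -1" using ent i j False by auto
      have sv: "s = 1 \<or> s = -1" unfolding s_def by auto
      have xi: "x i > 0 \<or> x i < 0" using nz i by force
      have xj: "x j > 0 \<or> x j < 0" using nz j by force
      from Bv sv xi xj pos show ?thesis unfolding A_def
        by (auto simp: zero_less_mult_iff mult_less_0_iff)
    qed
  qed
  have qw: "quad n B w = s * quad n A u"
  proof -
    have "quad n B w = (\<Sum>i<n. \<Sum>j<n. u i * (sgn (x i) * B i j * sgn (x j)) * u j)"
      unfolding quad_def w_def by (intro sum.cong refl) (simp add: ac_simps)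
    also have "\<dots> = (\<Sum>i<n. \<Sum>j<n. s * (u i * A i j * u j))" using sg by (intro sum.cong refl) (simp add: ac_simps)
    also have "\<dots> = s * quad n A u" unfolding quad_def by (simp add: sum_distrib_left)
    finally show ?thesis .
  qed
  have nw: "nrm n w = nrm n u" unfolding nrm_def w_def using nz
    by (intro sum.cong refl) (auto simp: power_mult_distrib sgn_if)
  from eu obtain i1 where "i1 < n" "u i1 \<noteq> 0" unfolding eigv_def by auto
  hence nu: "nrm n u > 0" by (rule nrm_pos)
  have qu: "quad n A u = spectral_radius (cmat n A) * nrm n u" by (rule eig_quad[OF eu])
  have "spectral_radius (cmat n A) \<le> spectral_radius (cmat n B)"
  proof (cases "r \<ge> 0")
    case True
    hence "quad n B w = spectral_radius (cmat n A) * nrm n w" using qw qu nw unfolding s_def by simp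
    thus ?thesis using rho_lb[OF spB n0, of "spectral_radius (cmat n A)" w] nu nw by simp
  next
    case False
    hence "quad n B w = - spectral_radius (cmat n A) * nrm n w" using qw qu nw unfolding s_def by simp
    thus ?thesis using rho_lb_neg[OF spB n0, of w "spectral_radius (cmat n A)"] nu nw by simp
  qed
  thus False using lt unfolding A_def by simp
qed


lemma map_insort_key: "map f (insort_key f x ys) = insort (f x) (map f ys)"
  by (induct ys) auto

lemma sort_map_key: "sort (map f xs) = map f (sort_key f xs)"
  by (induct xs) (auto simp: map_insort_key)

definition gB :: "'a::linorder set \<Rightarrow> 'a set set \<Rightarrow> ('a set \<Rightarrow> int) \<Rightarrow> nat \<Rightarrow> nat \<Rightarrow> real" where
  "gB V E \<pi> = (\<lambda>i j. if {sorted_list_of_set V ! i, sorted_list_of_set V ! j} \<in> E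
      then real_of_int (\<pi> {sorted_list_of_set V ! i, sorted_list_of_set V ! j}) else 0)"

definition gA :: "'a::linorder set \<Rightarrow> 'a set set \<Rightarrow> nat \<Rightarrow> nat \<Rightarrow> real" where
  "gA V E = gB V E (\<lambda>_. 1)"

lemma signed_cmat: "signed_adj_mat V E \<pi> = cmat (card V) (gB V E \<pi>)"
  unfolding signed_adj_mat_def cmat_def gB_def Let_def by (intro eq_matI) auto

lemma rho_cmat: "rho V E = spectral_radius (cmat (card V) (gA V E))"
  unfolding rho_def adj_mat_def gA_def signed_cmat ..

lemma rho_signed_cmat: "rho_signed V E \<pi> = spectral_radius (cmat (card V) (gB V E \<pi>))"
  unfolding rho_signed_def signed_cmat ..

lemma adj_cmat: "adj_mat V E = cmat (card V) (gA V E)"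
  unfolding adj_mat_def gA_def signed_cmat ..

lemma cmat_cong: "(\<forall>i<n. \<forall>j<n. M i j = M' i j) \<Longrightarrow> cmat n M = cmat n M'"
  unfolding cmat_def by (intro eq_matI) auto

lemma gB_symm: "symm n (gB V E \<pi>)"
  unfolding symm_def gB_def by (auto simp: insert_commute)

lemma gA_symm: "symm n (gA V E)"
  unfolding gA_def by (rule gB_symm)

lemma gB_diag: "simple_graph V E \<Longrightarrow> gB V E \<pi> i i = 0"
  unfolding simple_graph_def gB_def by fastforce

lemma gA_diag: "simple_graph V E \<Longrightarrow> gA V E i i = 0"
  unfolding gA_def by (rule gB_diag)

lemma gA_ent: "gA V E i j \<in> {0,1}"
  unfolding gA_def gB_def by auto

lemma gA_nn: "gA V E i j \<ge> 0"
  unfolding gA_def gB_def by auto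

lemma gA_nz: "gA V E i j \<noteq> 0 \<longleftrightarrow> {sorted_list_of_set V ! i, sorted_list_of_set V ! j} \<in> E"
  unfolding gA_def gB_def by auto

lemma gB_ent: "signing E \<pi> \<Longrightarrow> gB V E \<pi> i j \<in> {-1,0,1}"
  unfolding signing_def gB_def by (auto split: if_splits)

lemma gB_abs: "signing E \<pi> \<Longrightarrow> (\<lambda>i j. \<bar>gB V E \<pi> i j\<bar>) = gA V E"
  unfolding signing_def gB_def gA_def by (intro ext) (auto split: if_splits)

lemma gB_restrict: "gB V E \<pi> = gB V E (restrict \<pi> E)"
  unfolding gB_def by (intro ext) auto

lemma vs_facts:
  assumes "finite V"
  shows "distinct (sorted_list_of_set V)" "length (sorted_list_of_set V) = card V" "set (sorted_list_of_set V) = V"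
  using assms by auto

lemma vs_idx: "finite V \<Longrightarrow> w \<in> V \<Longrightarrow> \<exists>j<card V. sorted_list_of_set V ! j = w"
  by (metis in_set_conv_nth length_sorted_list_of_set set_sorted_list_of_set)

lemma vs_in: "finite V \<Longrightarrow> i < card V \<Longrightarrow> sorted_list_of_set V ! i \<in> V"
  by (metis nth_mem length_sorted_list_of_set set_sorted_list_of_set)

lemma vs_inj: "finite V \<Longrightarrow> i < card V \<Longrightarrow> j < card V \<Longrightarrow> (sorted_list_of_set V ! i = sorted_list_of_set V ! j) = (i = j)"
  by (metis distinct_sorted_list_of_set length_sorted_list_of_set nth_eq_iff_index_eq)

lemma edge_idx:
  assumes sg: "simple_graph V E" and e: "e \<in> E"
  shows "\<exists>p<card V. \<exists>q<card V. p \<noteq> q \<and> e = {sorted_list_of_set V ! p, sorted_list_of_set V ! q}"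
proof -
  have fin: "finite V" and eV: "e \<subseteq> V" and c: "card e = 2" using sg e unfolding simple_graph_def by auto
  from c obtain a b where ab: "e = {a,b}" "a \<noteq> b" by (meson card_2_iff)
  from vs_idx[OF fin, of a] vs_idx[OF fin, of b] eV ab obtain p q where
    "p < card V" "sorted_list_of_set V ! p = a" "q < card V" "sorted_list_of_set V ! q = b" by auto
  thus ?thesis using ab by auto
qed

lemma gA_del_edge:
  assumes fin: "finite V" and p: "p < card V" and q: "q < card V"
  shows "cmat (card V) (gA V (del_edge_E E {sorted_list_of_set V ! p, sorted_list_of_set V ! q}))
       = cmat (card V) (delM (gA V E) p q)"
proof (rule cmat_cong, intro allI impI)
  fix i j assume i: "i < card V" and j: "j < card V"
  have "({sorted_list_of_set V ! i, sorted_list_of_set V ! j} = {sorted_list_of_set V ! p, sorted_list_of_set V ! q})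
     = ((i = p \<and> j = q) \<or> (i = q \<and> j = p))"
    unfolding doubleton_eq_iff using vs_inj[OF fin] i j p q by auto
  thus "gA V (del_edge_E E {sorted_list_of_set V ! p, sorted_list_of_set V ! q}) i j = delM (gA V E) p q i j"
    unfolding gA_def gB_def delM_def del_edge_E_def by auto
qed

lemma remove1_nth:
  assumes d: "distinct xs" and p: "p < length xs" and i: "i < length xs - 1"
  shows "remove1 (xs ! p) xs ! i = xs ! (skip p i)"
proof -
  have split: "xs = take p xs @ xs ! p # drop (Suc p) xs" by (rule id_take_nth_drop[OF p])
  have nin: "xs ! p \<notin> set (take p xs)"
  proof
    assume "xs ! p \<in> set (take p xs)"
    then obtain j where j: "j < length (take p xs)" "take p xs ! j = xs ! p" by (auto simp: in_set_conv_nth)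
    hence "xs ! j = xs ! p" "j < p" using p by auto
    thus False using nth_eq_iff_index_eq[OF d] p by force
  qed
  have "remove1 (xs ! p) xs = take p xs @ drop (Suc p) xs"
    by (subst split) (simp add: remove1_append nin)
  thus ?thesis using p i unfolding skip_def by (auto simp: nth_append min_def)
qed

lemma gA_del_vertex:
  assumes fin: "finite V" and p: "p < card V"
  shows "rho (del_vertex_V V (sorted_list_of_set V ! p)) (del_vertex_E E (sorted_list_of_set V ! p))
       = spectral_radius (cmat (card V - 1) (minor (gA V E) p))"
proof -
  define vs where "vs = sorted_list_of_set V"
  define v where "v = vs ! p"
  have vV: "v \<in> V" unfolding v_def vs_def using vs_in[OF fin p] .
  have cV: "card (V - {v}) = card V - 1" using vV fin by simp
  have sl: "sorted_list_of_set (V - {v}) = remove1 v vs"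
    unfolding vs_def using sorted_list_of_set_remove[OF fin] .
  have nth: "\<And>i. i < card V - 1 \<Longrightarrow> sorted_list_of_set (V - {v}) ! i = vs ! (skip p i)"
  proof -
    fix i assume i: "i < card V - 1"
    have "sorted_list_of_set (V - {v}) ! i = remove1 v vs ! i" using sl by simp
    also have "\<dots> = vs ! skip p i" unfolding v_def
      by (rule remove1_nth) (use vs_facts[OF fin] p i in \<open>auto simp: vs_def\<close>)
    finally show "sorted_list_of_set (V - {v}) ! i = vs ! (skip p i)" .
  qed
  have sk: "\<And>i. i < card V - 1 \<Longrightarrow> skip p i < card V \<and> skip p i \<noteq> p"
    unfolding skip_def by auto
  have "cmat (card (V - {v})) (gA (V - {v}) (del_vertex_E E v)) = cmat (card V - 1) (minor (gA V E) p)"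
    unfolding cV
  proof (rule cmat_cong, intro allI impI)
    fix i j assume i: "i < card V - 1" and j: "j < card V - 1"
    have ne: "vs ! skip p i \<noteq> v" "vs ! skip p j \<noteq> v"
      using vs_inj[OF fin] sk[OF i] sk[OF j] p unfolding v_def vs_def by auto
    show "gA (V - {v}) (del_vertex_E E v) i j = minor (gA V E) p i j"
      unfolding gA_def gB_def minor_def del_vertex_E_def nth[OF i] nth[OF j]
      using ne unfolding vs_def by auto
  qed
  thus ?thesis unfolding rho_cmat del_vertex_V_def v_def vs_def by simp
qed

lemma conn_gA:
  assumes sg: "simple_graph V E" and cg: "connected_graph V E"
  shows "conn (card V) (gA V E)"
  unfolding conn_def
proof (intro allI impI)
  fix S assume S: "S \<subseteq> {..<card V}" and ne: "S \<noteq> {}"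
    and cl: "\<forall>i\<in>S. \<forall>j<card V. gA V E i j \<noteq> 0 \<longrightarrow> j \<in> S"
  have fin: "finite V" using sg unfolding simple_graph_def by auto
  define vs where "vs = sorted_list_of_set V"
  from ne obtain i0 where i0: "i0 \<in> S" by auto
  have i0n: "i0 < card V" using i0 S by auto
  define T where "T = (\<lambda>i. vs ! i) ` S"
  have reach: "\<And>w. (\<lambda>x y. {x, y} \<in> E)\<^sup>*\<^sup>* (vs ! i0) w \<Longrightarrow> w \<in> T"
  proof -
    fix w assume "(\<lambda>x y. {x, y} \<in> E)\<^sup>*\<^sup>* (vs ! i0) w"
    thus "w \<in> T"
    proof (induct rule: rtranclp_induct)
      case base thus ?case unfolding T_def using i0 by auto
    next
      case (step x y)
      from step(3) obtain i where i: "i \<in> S" "x = vs ! i" unfolding T_def by auto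
      have "{x,y} \<subseteq> V" using step(2) sg unfolding simple_graph_def by auto
      hence "y \<in> V" by auto
      from vs_idx[OF fin this] obtain j where j: "j < card V" "vs ! j = y" unfolding vs_def by auto
      have "gA V E i j \<noteq> 0" unfolding gA_nz using step(2) i j unfolding vs_def by auto
      hence "j \<in> S" using cl i j by auto
      thus ?case unfolding T_def using j by auto
    qed
  qed
  show "{..<card V} \<subseteq> S"
  proof
    fix k assume k: "k \<in> {..<card V}"
    have "vs ! k \<in> V" using vs_in[OF fin, of k] k unfolding vs_def by auto
    moreover have "vs ! i0 \<in> V" using vs_in[OF fin i0n] unfolding vs_def .
    ultimately have "(\<lambda>x y. {x, y} \<in> E)\<^sup>*\<^sup>* (vs ! i0) (vs ! k)" using cg unfolding connected_graph_def by auto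
    hence "vs ! k \<in> T" by (rule reach)
    then obtain i where i: "i \<in> S" "vs ! k = vs ! i" unfolding T_def by auto
    hence "k = i" using vs_inj[OF fin, of k i] k S unfolding vs_def by auto
    thus "k \<in> S" using i by simp
  qed
qed


theorem mainTheorem3:
  fixes V :: "'a::linorder set" and E :: "'a set set"
  assumes "simple_graph V E" and "connected_graph V E" and "card V \<ge> 2"
  shows "(lambda V E 2 < rho_V V E \<and> rho_V V E \<le> rho_E V E)
       \<and> (\<not> bipartite_graph V E \<longrightarrow> - lambda V E (card V) < rho_E V E)
       \<and> (Gamma V E \<noteq> {} \<longrightarrow> rho_Gamma V E < rho_E V E)"
proof -
  note sg = assms(1) and cg = assms(2) and n2' = assms(3)
  define n where "n = card V"
  define vs where "vs = sorted_list_of_set V"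
  define A where "A = gA V E"
  have n2: "n \<ge> 2" using n2' unfolding n_def .
  have fin: "finite V" using sg unfolding simple_graph_def by auto
  have SA: "symm n A" unfolding A_def by (rule gA_symm)
  have nnA: "\<forall>i<n. \<forall>j<n. A i j \<ge> 0" unfolding A_def using gA_nn by auto
  have entA: "\<forall>i<n. \<forall>j<n. A i j \<in> {0,1}" unfolding A_def using gA_ent by auto
  have dgA: "\<forall>i<n. A i i = 0" unfolding A_def using gA_diag[OF sg] by auto
  have cnA: "conn n A" unfolding A_def n_def by (rule conn_gA[OF sg cg])
  obtain d where sp: "specd n A d" using specd_ex[OF SA] by auto
  define P where "P = sort_key d [0..<n]"
  have Pl: "length P = n" unfolding P_def by simp
  have Pd: "distinct P" unfolding P_def by simp
  have Ps: "set P = {..<n}" unfolding P_def by auto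
  have Psort: "sorted (map d P)" unfolding P_def by simp
  have ED: "eigenvalues_desc (adj_mat V E) = rev (map d P)"
    unfolding adj_cmat eigenvalues_desc_cmat[OF sp[unfolded A_def n_def]] P_def n_def sort_map_key ..
  have lam2: "lambda V E 2 = d (P ! (n-2))"
    unfolding lambda_def ED using Pl n2 by (simp add: rev_nth numeral_2_eq_2)
  have lamn: "lambda V E (card V) = d (P ! 0)"
    unfolding lambda_def ED n_def[symmetric] using Pl n2 by (simp add: rev_nth)
  define k1 where "k1 = P ! (n-1)"
  define k2 where "k2 = P ! (n-2)"
  define k0 where "k0 = P ! 0"
  have Pin: "\<And>i. i < n \<Longrightarrow> P ! i < n"
  proof -
    fix i assume "i < n"
    hence "P ! i \<in> set P" using Pl by simp
    thus "P ! i < n" using Ps by auto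
  qed
  have kn: "k1 < n" "k2 < n" "k0 < n" unfolding k1_def k2_def k0_def using n2 by (auto intro!: Pin)
  have k12: "k1 \<noteq> k2" unfolding k1_def k2_def using nth_eq_iff_index_eq[OF Pd] Pl n2 by auto
  have mx: "\<forall>k<n. d k \<le> d k1"
  proof (intro allI impI)
    fix k assume "k < n"
    hence "k \<in> set P" using Ps by auto
    then obtain j where j: "j < n" "P ! j = k" using Pl by (auto simp: in_set_conv_nth)
    have "map d P ! j \<le> map d P ! (n-1)" using Psort j Pl by (auto simp: sorted_iff_nth_mono)
    thus "d k \<le> d k1" using j Pl unfolding k1_def by simp
  qed
  have mn: "\<forall>k<n. d k0 \<le> d k"
  proof (intro allI impI)
    fix k assume "k < n"
    hence "k \<in> set P" using Ps by auto
    then obtain j where j: "j < n" "P ! j = k" using Pl by (auto simp: in_set_conv_nth)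
    have "map d P ! 0 \<le> map d P ! j" using Psort j Pl by (auto simp: sorted_iff_nth_mono)
    thus "d k0 \<le> d k" using j Pl unfolding k0_def by simp
  qed
  have finE: "finite E"
  proof -
    have "E \<subseteq> Pow V" using sg unfolding simple_graph_def by auto
    thus ?thesis using fin by (meson finite_Pow_iff finite_subset)
  qed
  have rhoE_ge: "\<And>p q. p < n \<Longrightarrow> q < n \<Longrightarrow> A p q \<noteq> 0 \<Longrightarrow> spectral_radius (cmat n (delM A p q)) \<le> rho_E V E"
  proof -
    fix p q assume p: "p < n" and q: "q < n" and a: "A p q \<noteq> 0"
    have e: "{vs ! p, vs ! q} \<in> E" using a unfolding A_def gA_nz vs_def .
    have "spectral_radius (cmat n (delM A p q)) = rho V (del_edge_E E {vs ! p, vs ! q})"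
      unfolding rho_cmat A_def n_def vs_def using gA_del_edge[OF fin, of p q E] p q unfolding n_def by simp
    also have "\<dots> \<le> rho_E V E" unfolding rho_E_def using finE e by (intro Max_ge) auto
    finally show "spectral_radius (cmat n (delM A p q)) \<le> rho_E V E" .
  qed
  have nbr: "\<And>p. p < n \<Longrightarrow> \<exists>q<n. A p q \<noteq> 0 \<and> q \<noteq> p"
  proof -
    fix p assume p: "p < n"
    define i1 :: nat where "i1 = (if p = 0 then 1 else 0)"
    have "\<exists>p'\<in>{p}. \<exists>q<n. A p' q \<noteq> 0 \<and> q \<notin> {p}"
      by (rule conn_exit[OF cnA, of "{p}" p i1]) (use p n2 in \<open>auto simp: i1_def\<close>)
    thus "\<exists>q<n. A p q \<noteq> 0 \<and> q \<noteq> p" by auto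
  qed
  have a1: "lambda V E 2 < rho_V V E"
  proof -
    from abs_a1[OF SA nnA cnA n2 sp kn(1) kn(2) k12 mx] obtain v where
      v: "v < n" "d k2 < spectral_radius (cmat (n-1) (minor A v))" by auto
    have "spectral_radius (cmat (n-1) (minor A v)) = rho (del_vertex_V V (vs ! v)) (del_vertex_E E (vs ! v))"
      using gA_del_vertex[OF fin, of v E] v unfolding A_def n_def vs_def by simp
    also have "\<dots> \<le> rho_V V E" unfolding rho_V_def using fin vs_in[OF fin, of v] v
      unfolding n_def vs_def by (intro Max_ge) auto
    finally show ?thesis using v lam2 unfolding k2_def by simp
  qed
  have a2: "rho_V V E \<le> rho_E V E"
  proof -
    have "V \<noteq> {}" using n2 unfolding n_def by auto
    have "\<forall>u\<in>V. rho (del_vertex_V V u) (del_vertex_E E u) \<le> rho_E V E"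
    proof
      fix u assume u: "u \<in> V"
      from vs_idx[OF fin u] obtain p where p: "p < n" "vs ! p = u" unfolding n_def vs_def by auto
      from nbr[OF p(1)] obtain q where q: "q < n" "A p q \<noteq> 0" "q \<noteq> p" by auto
      have "rho (del_vertex_V V u) (del_vertex_E E u) = spectral_radius (cmat (n-1) (minor A p))"
        using gA_del_vertex[OF fin, of p E] p unfolding A_def n_def vs_def by simp
      also have "\<dots> \<le> spectral_radius (cmat n (delM A p q))"
        by (rule abs_a2[OF SA nnA n2 p(1) q(1)]) (use q in auto)
      also have "\<dots> \<le> rho_E V E" by (rule rhoE_ge[OF p(1) q(1) q(2)])
      finally show "rho (del_vertex_V V u) (del_vertex_E E u) \<le> rho_E V E" .
    qed
    thus ?thesis unfolding rho_V_def using fin \<open>V \<noteq> {}\<close> by (subst Max_le_iff) auto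
  qed
  have b: "\<not> bipartite_graph V E \<longrightarrow> - lambda V E (card V) < rho_E V E"
  proof (intro impI)
    assume nb: "\<not> bipartite_graph V E"
    show "- lambda V E (card V) < rho_E V E"
    proof (rule ccontr)
      assume "\<not> - lambda V E (card V) < rho_E V E"
      hence le: "rho_E V E \<le> - d k0" using lamn unfolding k0_def by simp
      have hyp: "\<forall>p<n. \<forall>q<n. A p q \<noteq> 0 \<longrightarrow> spectral_radius (cmat n (delM A p q)) \<le> - d k0"
        using rhoE_ge le by force
      from abs_b[OF entA SA dgA cnA n2 sp kn(3) mn hyp] obtain x :: "nat \<Rightarrow> real" where
        x: "\<forall>i<n. \<forall>j<n. A i j \<noteq> 0 \<longrightarrow> x i * x j < 0" by auto
      define S where "S = {vs ! i | i. i < n \<and> x i > 0}"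
      have "bipartite_graph V E"
        unfolding bipartite_graph_def
      proof (intro exI[of _ S] conjI allI impI)
        show "S \<subseteq> V" unfolding S_def vs_def n_def using vs_in[OF fin] by auto
        fix a b assume ab: "{a, b} \<in> E"
        have "{a,b} \<subseteq> V" using ab sg unfolding simple_graph_def by auto
        then obtain i j where i: "i < n" "vs ! i = a" and j: "j < n" "vs ! j = b"
          using vs_idx[OF fin, of a] vs_idx[OF fin, of b] unfolding n_def vs_def by auto
        have "A i j \<noteq> 0" unfolding A_def gA_nz using ab i j unfolding vs_def by simp
        hence xij: "x i * x j < 0" using x i j by auto
        have memS: "\<And>k. k < n \<Longrightarrow> (vs ! k \<in> S) = (x k > 0)"
          unfolding S_def using vs_inj[OF fin] unfolding n_def vs_def by auto
        have "(x i > 0) = (\<not> x j > 0)" using xij by (auto simp: mult_less_0_iff)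
        thus "(a \<in> S) = (b \<notin> S)" using memS[OF i(1)] memS[OF j(1)] i j by simp
      qed
      thus False using nb by simp
    qed
  qed
  have c: "Gamma V E \<noteq> {} \<longrightarrow> rho_Gamma V E < rho_E V E"
  proof (intro impI)
    assume ne: "Gamma V E \<noteq> {}"
    have fimg: "finite (rho_signed V E ` Gamma V E)"
    proof (rule finite_subset)
      show "rho_signed V E ` Gamma V E \<subseteq> rho_signed V E ` (PiE E (\<lambda>_. {-1, 1}))"
      proof
        fix r assume "r \<in> rho_signed V E ` Gamma V E"
        then obtain \<pi> where \<pi>: "\<pi> \<in> Gamma V E" "r = rho_signed V E \<pi>" by auto
        have sgn: "signing E \<pi>" using \<pi> unfolding Gamma_def by auto
        have "restrict \<pi> E \<in> PiE E (\<lambda>_. {-1, 1})" using sgn unfolding signing_def by auto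
        moreover have "r = rho_signed V E (restrict \<pi> E)"
          using \<pi> unfolding rho_signed_cmat by (simp add: gB_restrict[symmetric])
        ultimately show "r \<in> rho_signed V E ` (PiE E (\<lambda>_. {-1, 1}))" by auto
      qed
      show "finite (rho_signed V E ` (PiE E (\<lambda>_. {-1, 1})))" using finE by (intro finite_imageI finite_PiE) auto
    qed
    have "rho_Gamma V E \<in> rho_signed V E ` Gamma V E"
      unfolding rho_Gamma_def using fimg ne by (intro Max_in) auto
    then obtain \<pi> where \<pi>: "\<pi> \<in> Gamma V E" "rho_Gamma V E = rho_signed V E \<pi>" by auto
    have sgn: "signing E \<pi>" and ltG: "rho_signed V E \<pi> < rho V E" using \<pi> unfolding Gamma_def by auto
    define B where "B = gB V E \<pi>"
    have absB: "(\<lambda>i j. \<bar>B i j\<bar>) = A" unfolding B_def A_def by (rule gB_abs[OF sgn])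
    have entB: "\<forall>i<n. \<forall>j<n. B i j \<in> {-1,0,1}" unfolding B_def using gB_ent[OF sgn] by auto
    have SB: "symm n B" unfolding B_def by (rule gB_symm)
    have dgB: "\<forall>i<n. B i i = 0" unfolding B_def using gB_diag[OF sg] by auto
    have cnB: "conn n (\<lambda>i j. \<bar>B i j\<bar>)" unfolding absB by (rule cnA)
    have n0: "n > 0" using n2 by simp
    have lt: "spectral_radius (cmat n B) < spectral_radius (cmat n (\<lambda>i j. \<bar>B i j\<bar>))"
      using ltG absB unfolding rho_signed_cmat rho_cmat B_def A_def n_def by simp
    from abs_c[OF entB SB dgB cnB n0 lt] obtain p q where
      pq: "p < n" "q < n" "B p q \<noteq> 0" "spectral_radius (cmat n B) < spectral_radius (cmat n (delM A p q))"
      unfolding absB by auto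
    have "A p q \<noteq> 0" using pq(3) absB by (metis abs_0_eq)
    from rhoE_ge[OF pq(1) pq(2) this] pq(4)
    have "spectral_radius (cmat n B) < rho_E V E" by simp
    thus "rho_Gamma V E < rho_E V E" using \<pi> unfolding rho_signed_cmat B_def n_def by simp
  qed
  show ?thesis using a1 a2 b c by blast
qed


end
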